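(* Let $G$ be an open subgroup either of $\mathrm{GL}_2(\mathbb{Z}_\ell)$ or of the normalizer of a Cartan subgroup of $\mathrm{GL}_2(\mathbb{Z}_\ell)$. For all integers $a,b\geq0$ the set $\mathcal{M}_{a,b}$ is measurable in $G$ and $\mu_{a,b}=\mu_{a,b}(n)$ for every $n>a+b$; in particular $\mu_{a,b}=0$ if and only if $\mathcal{M}_{a,b}=\emptyset$. Moreover the set $\bigcup_{a,b\in\mathbb{N}}\mathcal{M}_{a,b}$ is measurable in $G$ and its complement in $G$ has Haar measure zero.
   Context: Let $\ell$ be a prime. A Cartan subgroup of $\mathrm{GL}_2(\mathbb{Z}_\ell)$ is the unit group $R^\times$ of a quadratic ring $R$ over $\mathbb{Z}_\ell$ (a subring of a reduced degree-2 $\mathbb{Q}_\ell$-algebra $F$ that is a finitely generated $\mathbb{Z}_\ell$-module with $\mathbb{Q}_\ell R=F$), embedded via its left-multiplication action on $R$ in a $\mathbb{Z}_\ell$-basis. Identify each $M\in\mathrm{GL}_2(\mathbb{Z}_\ell)$ with an automorphism of $\varinjlim_n(\mathbb{Z}/\ell^n\mathbb{Z})^2$. For $X\subseteq\mathrm{GL}_2(\mathbb{Z}_\ell)$, $X(n)$ denotes the image of $X$ in $\mathrm{GL}_2(\mathbb{Z}/\ell^n\mathbb{Z})$. For a subgroup $G$ and integers $a,b\geq0$ let $\mathcal{M}_{a,b}=\{M\in G:\ \ker(M-I)\cong\mathbb{Z}/\ell^a\mathbb{Z}\times\mathbb{Z}/\ell^{a+b}\mathbb{Z}\}$ (kernel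 on $\varinjlim_n(\mathbb{Z}/\ell^n\mathbb{Z})^2$), $\mathcal{M}_{a,b}(n)$ its image in $G(n)$, $\mu_{a,b}$ its measure for the Haar measure of $G$ normalized to total mass $1$, and $\mu_{a,b}(n)=\#\mathcal{M}_{a,b}(n)/\#G(n)$. *)

theory Defs
  imports "HOL-Probability.Probability_Measure" "HOL-Algebra.Elementary_Groups"
begin

text \<open>An element x of Z_l is represented by the sequence of its reductions:
  x n is the residue of x modulo l^n, taken in {0..<l^n}.\<close>

type_synonym zl = "nat \<Rightarrow> int"

definition Zl :: "nat \<Rightarrow> zl set" where
  "Zl l = {x. \<forall>n. 0 \<le> x n \<and> x n < int l ^ n \<and> x n = x (Suc n) mod int l ^ n}"

definition zadd :: "nat \<Rightarrow> zl \<Rightarrow> zl \<Rightarrow> zl" where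
  "zadd l x y = (\<lambda>n. (x n + y n) mod int l ^ n)"

definition zsub :: "nat \<Rightarrow> zl \<Rightarrow> zl \<Rightarrow> zl" where
  "zsub l x y = (\<lambda>n. (x n - y n) mod int l ^ n)"

definition zmul :: "nat \<Rightarrow> zl \<Rightarrow> zl \<Rightarrow> zl" where
  "zmul l x y = (\<lambda>n. (x n * y n) mod int l ^ n)"

definition zconst :: "nat \<Rightarrow> int \<Rightarrow> zl" where
  "zconst l c = (\<lambda>n. c mod int l ^ n)"

text \<open>(a,b,c,d) is the matrix [[a,b],[c,d]], acting on column vectors.\<close>

type_synonym mat2 = "zl \<times> zl \<times> zl \<times> zl"

definition Mat2 :: "nat \<Rightarrow> mat2 set" where
  "Mat2 l = {(a,b,c,d). a \<in> Zl l \<and> b \<in> Zl l \<and> c \<in> Zl l \<and> d \<in> Zl l}"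

definition mmul :: "nat \<Rightarrow> mat2 \<Rightarrow> mat2 \<Rightarrow> mat2" where
  "mmul l M N = (case M of (a,b,c,d) \<Rightarrow> case N of (e,f,g,h) \<Rightarrow>
     (zadd l (zmul l a e) (zmul l b g), zadd l (zmul l a f) (zmul l b h),
      zadd l (zmul l c e) (zmul l d g), zadd l (zmul l c f) (zmul l d h)))"

definition madd :: "nat \<Rightarrow> mat2 \<Rightarrow> mat2 \<Rightarrow> mat2" where
  "madd l M N = (case M of (a,b,c,d) \<Rightarrow> case N of (e,f,g,h) \<Rightarrow>
     (zadd l a e, zadd l b f, zadd l c g, zadd l d h))"

definition msub :: "nat \<Rightarrow> mat2 \<Rightarrow> mat2 \<Rightarrow> mat2" where
  "msub l M N = (case M of (a,b,c,d) \<Rightarrow> case N of (e,f,g,h) \<Rightarrow>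
     (zsub l a e, zsub l b f, zsub l c g, zsub l d h))"

definition mscal :: "nat \<Rightarrow> zl \<Rightarrow> mat2 \<Rightarrow> mat2" where
  "mscal l x M = (case M of (a,b,c,d) \<Rightarrow> (zmul l x a, zmul l x b, zmul l x c, zmul l x d))"

definition mid :: "nat \<Rightarrow> mat2" where
  "mid l = (zconst l 1, zconst l 0, zconst l 0, zconst l 1)"

definition GL2 :: "nat \<Rightarrow> mat2 set" where
  "GL2 l = {M \<in> Mat2 l. \<exists>N \<in> Mat2 l. mmul l M N = mid l \<and> mmul l N M = mid l}"

definition GL2grp :: "nat \<Rightarrow> mat2 monoid" where
  "GL2grp l = \<lparr>carrier = GL2 l, monoid.mult = mmul l, one = mid l\<rparr>"

definition red :: "mat2 \<Rightarrow> nat \<Rightarrow> int \<times> int \<times> int \<times> int" where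
  "red M n = (case M of (a,b,c,d) \<Rightarrow> (a n, b n, c n, d n))"

definition img :: "mat2 set \<Rightarrow> nat \<Rightarrow> (int \<times> int \<times> int \<times> int) set" where
  "img X n = (\<lambda>M. red M n) ` X"

definition lopen :: "nat \<Rightarrow> mat2 set \<Rightarrow> bool" where
  "lopen l U \<longleftrightarrow> U \<subseteq> Mat2 l \<and>
     (\<forall>M\<in>U. \<exists>k. {N \<in> Mat2 l. red N k = red M k} \<subseteq> U)"

definition lopen_in :: "nat \<Rightarrow> mat2 set \<Rightarrow> mat2 set \<Rightarrow> bool" where
  "lopen_in l S U \<longleftrightarrow> (\<exists>V. lopen l V \<and> U = V \<inter> S)"

text \<open>Matrix of left multiplication by the generator w (with w^2 = t w - n) in the
  Z_l-basis (1, w) of the quadratic ring Z_l[X]/(X^2 - t X + n).\<close>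
definition companion :: "nat \<Rightarrow> zl \<Rightarrow> zl \<Rightarrow> mat2" where
  "companion l t n = (zconst l 0, zsub l (zconst l 0) n, zconst l 1, t)"

text \<open>Image of the quadratic ring Z_l[w] under the left regular representation in the
  basis (1,w), transported by a change of basis P in GL_2(Z_l).\<close>
definition qring_image :: "nat \<Rightarrow> zl \<Rightarrow> zl \<Rightarrow> mat2 \<Rightarrow> mat2 \<Rightarrow> mat2 set" where
  "qring_image l t n P Pinv =
     {mmul l (mmul l P (madd l (mscal l x (mid l)) (mscal l y (companion l t n)))) Pinv
      | x y. x \<in> Zl l \<and> y \<in> Zl l}"

definition cartan :: "nat \<Rightarrow> mat2 set \<Rightarrow> bool" where
  "cartan l C \<longleftrightarrow> (\<exists>t n P Pinv. t \<in> Zl l \<and> n \<in> Zl l \<and>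
     zsub l (zmul l t t) (zmul l (zconst l 4) n) \<noteq> zconst l 0 \<and>
     P \<in> Mat2 l \<and> Pinv \<in> Mat2 l \<and> mmul l P Pinv = mid l \<and> mmul l Pinv P = mid l \<and>
     C = {r \<in> qring_image l t n P Pinv. \<exists>s \<in> qring_image l t n P Pinv.
            mmul l r s = mid l \<and> mmul l s r = mid l})"

definition normalizer2 :: "nat \<Rightarrow> mat2 set \<Rightarrow> mat2 set" where
  "normalizer2 l C = {g \<in> GL2 l.
     (\<lambda>x. mmul l (mmul l g x) (inv\<^bsub>GL2grp l\<^esub> g)) ` C = C}"

text \<open>lim_n Z/l^n Z (transition maps: multiplication by l) is identified with
  Z[1/l]/Z, represented by the rationals in [0,1) with l-power denominator.\<close>
definition Tl :: "nat \<Rightarrow> rat set" where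
  "Tl l = {q. 0 \<le> q \<and> q < 1 \<and> (\<exists>k (u::int). q = of_int u / of_nat (l ^ k))}"

definition lden :: "nat \<Rightarrow> rat \<Rightarrow> nat" where
  "lden l q = (LEAST k. \<exists>u::int. q = of_int u / of_nat (l ^ k))"

text \<open>Action of a matrix of M_2(Z_l) on (Z[1/l]/Z)^2: a vector with entries
  u/l^k, v/l^k is an element of (Z/l^k Z)^2 and is acted on by M mod l^k.\<close>
definition mact :: "nat \<Rightarrow> mat2 \<Rightarrow> rat \<times> rat \<Rightarrow> rat \<times> rat" where
  "mact l M v = (case M of (a,b,c,d) \<Rightarrow>
     (let k = max (lden l (fst v)) (lden l (snd v));
          u = \<lfloor>fst v * of_nat (l ^ k)\<rfloor>; w = \<lfloor>snd v * of_nat (l ^ k)\<rfloor>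
      in (frac (of_int (a k * u + b k * w) / of_nat (l ^ k)),
          frac (of_int (c k * u + d k * w) / of_nat (l ^ k)))))"

definition kerMI :: "nat \<Rightarrow> mat2 \<Rightarrow> (rat \<times> rat) set" where
  "kerMI l M = {v \<in> Tl l \<times> Tl l. mact l (msub l M (mid l)) v = (0, 0)}"

definition kergrp :: "nat \<Rightarrow> mat2 \<Rightarrow> (rat \<times> rat) monoid" where
  "kergrp l M = \<lparr>carrier = kerMI l M,
     monoid.mult = (\<lambda>v w. (frac (fst v + fst w), frac (snd v + snd w))), one = (0, 0)\<rparr>"

definition Mab :: "nat \<Rightarrow> mat2 set \<Rightarrow> nat \<Rightarrow> nat \<Rightarrow> mat2 set" where
  "Mab l G a b = {M \<in> G. kergrp l M \<cong>
       DirProd (integer_mod_group (l ^ a)) (integer_mod_group (l ^ (a + b)))}"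

definition mu_n :: "nat \<Rightarrow> mat2 set \<Rightarrow> nat \<Rightarrow> nat \<Rightarrow> nat \<Rightarrow> real" where
  "mu_n l G a b n = real (card (img (Mab l G a b) n)) / real (card (img G n))"

definition haar_prob :: "nat \<Rightarrow> mat2 set \<Rightarrow> mat2 measure \<Rightarrow> bool" where
  "haar_prob l G \<mu> \<longleftrightarrow> prob_space \<mu> \<and> space \<mu> = G \<and>
     sets \<mu> = sigma_sets G {U. lopen_in l G U} \<and>
     (\<forall>g\<in>G. \<forall>A\<in>sets \<mu>. (\<lambda>x. mmul l g x) ` A \<in> sets \<mu> \<and> emeasure \<mu> ((\<lambda>x. mmul l g x) ` A) = emeasure \<mu> A)"

end

theory Submission
  imports Defs "HOL-Number_Theory.Number_Theory"
begin


lemma Zl_D: "x \<in> Zl l \<Longrightarrow> 0 \<le> x n \<and> x n < int l ^ n \<and> x n = x (Suc n) mod int l ^ n"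
  unfolding Zl_def mem_Collect_eq by (erule allE)

lemma Zl_bounds: "x \<in> Zl l \<Longrightarrow> 0 \<le> x n \<and> x n < int l ^ n"
  using Zl_D by blast

lemma Zl_coh: "x \<in> Zl l \<Longrightarrow> x (Suc n) mod int l ^ n = x n"
  using Zl_D by metis

lemma Zl_mod: assumes "x \<in> Zl l" "k \<le> n" shows "x n mod int l ^ k = x k"
  using assms(2)
proof (induction n)
  case 0 then show ?case using Zl_bounds[OF assms(1), of 0] by simp
next
  case (Suc n)
  show ?case
  proof (cases "k = Suc n")
    case True then show ?thesis using Zl_bounds[OF assms(1), of "Suc n"] by simp
  next
    case False
    then have "k \<le> n" using Suc by simp
    have d: "int l ^ k dvd int l ^ n" using \<open>k \<le> n\<close> by (simp add: le_imp_power_dvd)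
    have "x (Suc n) mod int l ^ k = x (Suc n) mod int l ^ n mod int l ^ k"
      by (simp add: mod_mod_cancel[OF d])
    also have "\<dots> = x n mod int l ^ k" using Zl_coh[OF assms(1)] by simp
    finally show ?thesis using Suc.IH[OF \<open>k \<le> n\<close>] by simp
  qed
qed

lemma Zl_0: "x \<in> Zl l \<Longrightarrow> x 0 = 0"
  using Zl_bounds[of x l 0] by simp

lemma ZlI: assumes "l > 0" "\<And>n. x n = f n mod int l ^ n" "\<And>n. f (Suc n) mod int l ^ n = f n mod int l ^ n"
  shows "x \<in> Zl l"
  unfolding Zl_def mem_Collect_eq
proof
  fix n
  have p: "int l ^ n > 0" using assms(1) by simp
  have d: "int l ^ n dvd int l ^ Suc n" by simp
  have "x (Suc n) mod int l ^ n = f (Suc n) mod int l ^ n"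
    using assms(2)[of "Suc n"] mod_mod_cancel[OF d] by metis
  then show "0 \<le> x n \<and> x n < int l ^ n \<and> x n = x (Suc n) mod int l ^ n"
    using assms(2,3) p by simp
qed

lemma zadd_Zl: assumes "l > 0" "x \<in> Zl l" "y \<in> Zl l" shows "zadd l x y \<in> Zl l"
proof (rule ZlI[where f="\<lambda>n. x n + y n"])
  fix n
  have "(x (Suc n) + y (Suc n)) mod int l ^ n = (x (Suc n) mod int l ^ n + y (Suc n) mod int l ^ n) mod int l ^ n"
    by (rule mod_add_eq[symmetric])
  then show "(x (Suc n) + y (Suc n)) mod int l ^ n = (x n + y n) mod int l ^ n"
    using Zl_coh[OF assms(2)] Zl_coh[OF assms(3)] by simp
qed (auto simp: zadd_def assms)

lemma zsub_Zl: assumes "l > 0" "x \<in> Zl l" "y \<in> Zl l" shows "zsub l x y \<in> Zl l"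
proof (rule ZlI[where f="\<lambda>n. x n - y n"])
  fix n
  have "(x (Suc n) - y (Suc n)) mod int l ^ n = (x (Suc n) mod int l ^ n - y (Suc n) mod int l ^ n) mod int l ^ n"
    by (rule mod_diff_eq[symmetric])
  then show "(x (Suc n) - y (Suc n)) mod int l ^ n = (x n - y n) mod int l ^ n"
    using Zl_coh[OF assms(2)] Zl_coh[OF assms(3)] by simp
qed (auto simp: zsub_def assms)

lemma zmul_Zl: assumes "l > 0" "x \<in> Zl l" "y \<in> Zl l" shows "zmul l x y \<in> Zl l"
proof (rule ZlI[where f="\<lambda>n. x n * y n"])
  fix n
  have "(x (Suc n) * y (Suc n)) mod int l ^ n = (x (Suc n) mod int l ^ n * (y (Suc n) mod int l ^ n)) mod int l ^ n"
    by (rule mod_mult_eq[symmetric])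
  then show "(x (Suc n) * y (Suc n)) mod int l ^ n = (x n * y n) mod int l ^ n"
    using Zl_coh[OF assms(2)] Zl_coh[OF assms(3)] by simp
qed (auto simp: zmul_def assms)

lemma zconst_Zl: assumes "l > 0" shows "zconst l c \<in> Zl l"
proof (rule ZlI[where f="\<lambda>n. c"])
  fix n
  have d: "int l ^ n dvd int l ^ Suc n" by simp
  show "c mod int l ^ n = c mod int l ^ n" ..
qed (auto simp: zconst_def assms)


definition MatMon :: "nat \<Rightarrow> mat2 monoid" where
  "MatMon l = \<lparr>carrier = Mat2 l, monoid.mult = mmul l, one = mid l\<rparr>"

lemma mmul_Mat2: "l > 0 \<Longrightarrow> M \<in> Mat2 l \<Longrightarrow> N \<in> Mat2 l \<Longrightarrow> mmul l M N \<in> Mat2 l"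
  by (auto simp: Mat2_def mmul_def zadd_Zl zmul_Zl)

lemma mid_Mat2: "l > 0 \<Longrightarrow> mid l \<in> Mat2 l"
  by (auto simp: Mat2_def mid_def zconst_Zl)

lemma assoc_entry: fixes a b e f g h i k m :: int shows
 "((((a*e) mod m + (b*g) mod m) mod m * i) mod m + (((a*f) mod m + (b*h) mod m) mod m * k) mod m) mod m
 = ((a * (((e*i) mod m + (f*k) mod m) mod m)) mod m + (b * (((g*i) mod m + (h*k) mod m) mod m)) mod m) mod m"
proof -
  have "((((a*e) mod m + (b*g) mod m) mod m * i) mod m + (((a*f) mod m + (b*h) mod m) mod m * k) mod m) mod m
      = ((a*e + b*g) * i + (a*f + b*h) * k) mod m" by (simp add: mod_simps)
  also have "\<dots> = (a * (e*i + f*k) + b * (g*i + h*k)) mod m" by (simp add: algebra_simps)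
  also have "\<dots> = ((a * (((e*i) mod m + (f*k) mod m) mod m)) mod m + (b * (((g*i) mod m + (h*k) mod m) mod m)) mod m) mod m"
    by (simp add: mod_simps)
  finally show ?thesis .
qed

lemma mmul_assoc: "mmul l (mmul l M N) P = mmul l M (mmul l N P)"
  apply (cases M; cases N; cases P)
  apply (simp add: mmul_def zadd_def zmul_def fun_eq_iff assoc_entry)
  done

lemma Zl_modself: "x \<in> Zl l \<Longrightarrow> x n mod int l ^ n = x n"
  using Zl_bounds[of x l n] by simp

lemma mid_left: "M \<in> Mat2 l \<Longrightarrow> mmul l (mid l) M = M"
  apply (cases M)
  apply (auto simp: mmul_def zadd_def zmul_def fun_eq_iff mid_def zconst_def Mat2_def)
  apply (simp_all add: mod_simps Zl_modself)
  done

lemma mid_right: "M \<in> Mat2 l \<Longrightarrow> mmul l M (mid l) = M"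
  apply (cases M)
  apply (auto simp: mmul_def zadd_def zmul_def fun_eq_iff mid_def zconst_def Mat2_def)
  apply (simp_all add: mod_simps Zl_modself)
  done

lemma MatMon_monoid: "l > 0 \<Longrightarrow> monoid (MatMon l)"
  by (unfold_locales) (auto simp: MatMon_def mmul_Mat2 mid_Mat2 mmul_assoc mid_left mid_right)

lemma GL2grp_units: "GL2grp l = units_of (MatMon l)"
  unfolding GL2grp_def units_of_def MatMon_def GL2_def Units_def by auto

lemma GL2grp_group: "l > 0 \<Longrightarrow> group (GL2grp l)"
  using monoid.units_group[OF MatMon_monoid] GL2grp_units by metis

lemma carrier_GL2grp[simp]: "carrier (GL2grp l) = GL2 l" by (simp add: GL2grp_def)
lemma mult_GL2grp[simp]: "monoid.mult (GL2grp l) = mmul l" by (simp add: GL2grp_def)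
lemma one_GL2grp[simp]: "one (GL2grp l) = mid l" by (simp add: GL2grp_def)

lemma GL2_Mat2: "GL2 l \<subseteq> Mat2 l" by (auto simp: GL2_def)


definition lv :: "nat \<Rightarrow> nat \<Rightarrow> rat \<Rightarrow> bool" where
  "lv l m q \<longleftrightarrow> q * of_nat (l ^ m) \<in> \<int>"

definition crd :: "nat \<Rightarrow> nat \<Rightarrow> rat \<Rightarrow> int" where
  "crd l m q = \<lfloor>q * of_nat (l ^ m)\<rfloor>"

lemma lv_crd_eq: "lv l m q \<Longrightarrow> of_int (crd l m q) = q * of_nat (l ^ m)"
  unfolding lv_def crd_def by (metis Ints_cases floor_of_int)

lemma lv_crd: "l > 0 \<Longrightarrow> lv l m q \<Longrightarrow> q = of_int (crd l m q) / of_nat (l ^ m)"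
  using lv_crd_eq[of l m q] by (simp add: field_simps)

lemma lv_mono: assumes "lv l m q" "m \<le> m'"
  shows "lv l m' q \<and> crd l m' q = crd l m q * int l ^ (m' - m)"
proof -
  have e: "q * of_nat (l ^ m') = q * of_nat (l ^ m) * of_nat (l ^ (m' - m))"
    using assms(2) by (simp add: power_add[symmetric])
  have "q * of_nat (l ^ m') = of_int (crd l m q * int l ^ (m' - m))"
    unfolding e lv_crd_eq[OF assms(1), symmetric] by simp
  then show ?thesis unfolding lv_def crd_def by (metis Ints_of_int floor_of_int)
qed

lemma Tl_bounds: "q \<in> Tl l \<Longrightarrow> 0 \<le> q \<and> q < 1" by (simp add: Tl_def)

lemma crd_bounds: assumes "q \<in> Tl l" "l > 0" shows "0 \<le> crd l m q \<and> crd l m q < int l ^ m"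
proof -
  have "0 \<le> q * of_nat (l ^ m)" "q * of_nat (l ^ m) < of_nat (l ^ m)"
    using Tl_bounds[OF assms(1)] assms(2) by auto
  then show ?thesis unfolding crd_def
    by (metis floor_less_iff of_int_of_nat_eq of_nat_power zero_le_floor)
qed

lemma Tl_lden: assumes "q \<in> Tl l" shows "\<exists>u::int. q = of_int u / of_nat (l ^ lden l q)"
proof -
  from assms obtain k u where "q = of_int u / of_nat (l ^ k)" by (auto simp: Tl_def)
  then have ex: "\<exists>k. \<exists>u::int. q = of_int u / of_nat (l ^ k)" by blast
  show ?thesis unfolding lden_def by (rule LeastI_ex[OF ex])
qed

lemma lden_le_iff: assumes "q \<in> Tl l" "l > 0" shows "lden l q \<le> m \<longleftrightarrow> lv l m q"
proof
  assume le: "lden l q \<le> m"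
  obtain u where u: "q = of_int u / of_nat (l ^ lden l q)" using Tl_lden[OF assms(1)] by blast
  have "lv l (lden l q) q" unfolding lv_def using assms(2) by (subst u) simp
  then show "lv l m q" using lv_mono[OF _ le] by blast
next
  assume "lv l m q"
  then have "q = of_int (crd l m q) / of_nat (l ^ m)" using lv_crd assms(2) by blast
  then have "\<exists>u::int. q = of_int u / of_nat (l ^ m)" by blast
  then show "lden l q \<le> m" unfolding lden_def by (rule Least_le)
qed

lemma lv_lden: "q \<in> Tl l \<Longrightarrow> l > 0 \<Longrightarrow> lv l (lden l q) q"
  using lden_le_iff by blast

lemma mk_Tl: assumes "0 \<le> U" "U < int l ^ m" "l > 0"
  shows "of_int U / of_nat (l ^ m) \<in> Tl l \<and> lv l m (of_int U / of_nat (l ^ m)) \<and> crd l m (of_int U / of_nat (l ^ m)) = U"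
proof -
  have p: "(0::rat) < of_nat (l ^ m)" using assms(3) by simp
  have "of_int U < (of_nat (l ^ m) :: rat)" using assms(2) by (metis of_int_less_iff of_int_of_nat_eq of_nat_power)
  then have "of_int U / of_nat (l ^ m) < (1::rat)" using p by simp
  moreover have "0 \<le> (of_int U / of_nat (l ^ m) :: rat)" using assms(1) by simp
  ultimately show ?thesis unfolding Tl_def lv_def crd_def using p by auto
qed

lemma frac_div_zero: assumes "l > 0"
  shows "frac (of_int X / of_nat (l ^ k) :: rat) = 0 \<longleftrightarrow> int l ^ k dvd X"
proof -
  have "(of_nat (l ^ k) :: rat) = of_int (int l ^ k)" by simp
  then show ?thesis using of_int_div_of_int_in_Ints_iff[of X "int l ^ k", where 'a=rat] assms
    by simp
qed

lemma div_Ints_iff: assumes "l > 0"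
  shows "(of_int X / of_nat l ^ k :: rat) \<in> \<int> \<longleftrightarrow> int l ^ k dvd X"
  using frac_div_zero[OF assms, of X k] by simp

lemma frac_div_mod: assumes "l > 0"
  shows "frac (of_int X / of_nat (l ^ k) :: rat) = of_int (X mod int l ^ k) / of_nat (l ^ k)"
proof -
  have e: "(of_nat (l ^ k) :: rat) = of_int (int l ^ k)" by simp
  have "\<lfloor>of_int X / of_int (int l ^ k) :: rat\<rfloor> = X div int l ^ k" by (rule floor_divide_of_int_eq)
  then have "frac (of_int X / of_nat (l ^ k) :: rat) = of_int X / of_int (int l ^ k) - of_int (X div int l ^ k)"
    unfolding frac_def e by simp
  also have "\<dots> = of_int (X - int l ^ k * (X div int l ^ k)) / of_int (int l ^ k)"
    using assms by (simp add: field_simps)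
  also have "X - int l ^ k * (X div int l ^ k) = X mod int l ^ k" by (metis minus_mult_div_eq_mod)
  finally show ?thesis unfolding e .
qed


definition KC :: "nat \<Rightarrow> zl \<Rightarrow> zl \<Rightarrow> zl \<Rightarrow> zl \<Rightarrow> nat \<Rightarrow> int \<Rightarrow> int \<Rightarrow> bool" where
  "KC l \<alpha> \<beta> \<gamma> \<delta> m U W \<longleftrightarrow> int l ^ m dvd \<alpha> m * U + \<beta> m * W \<and> int l ^ m dvd \<gamma> m * U + \<delta> m * W"

lemma dvd_lvl: assumes "\<alpha> \<in> Zl l" "\<beta> \<in> Zl l" "k \<le> m"
  shows "int l ^ k dvd \<alpha> m * U + \<beta> m * W \<longleftrightarrow> int l ^ k dvd \<alpha> k * U + \<beta> k * W"
proof -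
  have "(\<alpha> m * U + \<beta> m * W) mod int l ^ k = ((\<alpha> m mod int l ^ k) * U + (\<beta> m mod int l ^ k) * W) mod int l ^ k"
    by (metis mod_add_cong mod_mult_left_eq)
  also have "\<dots> = (\<alpha> k * U + \<beta> k * W) mod int l ^ k"
    using Zl_mod[OF assms(1,3)] Zl_mod[OF assms(2,3)] by simp
  finally show ?thesis by (simp add: dvd_eq_mod_eq_0)
qed

lemma dvd_shift: assumes "l > 0" "k \<le> m"
  shows "int l ^ m dvd int l ^ (m - k) * X \<longleftrightarrow> int l ^ k dvd X"
proof -
  have "int l ^ m = int l ^ (m - k) * int l ^ k" using assms(2) by (simp add: power_add[symmetric])
  then show ?thesis using assms(1) by simp
qed

lemma KC_level: assumes "l > 0" "\<alpha> \<in> Zl l" "\<beta> \<in> Zl l" "\<gamma> \<in> Zl l" "\<delta> \<in> Zl l"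
  "lv l k q1" "lv l k q2" "k \<le> m"
  shows "KC l \<alpha> \<beta> \<gamma> \<delta> m (crd l m q1) (crd l m q2) \<longleftrightarrow> KC l \<alpha> \<beta> \<gamma> \<delta> k (crd l k q1) (crd l k q2)"
proof -
  have c1: "crd l m q1 = crd l k q1 * int l ^ (m - k)" using lv_mono[OF assms(6,8)] by blast
  have c2: "crd l m q2 = crd l k q2 * int l ^ (m - k)" using lv_mono[OF assms(7,8)] by blast
  have e: "x m * (crd l k q1 * int l ^ (m - k)) + y m * (crd l k q2 * int l ^ (m - k))
      = int l ^ (m - k) * (x m * crd l k q1 + y m * crd l k q2)" for x y :: zl
    by (simp add: algebra_simps)
  show ?thesis unfolding KC_def c1 c2 e dvd_shift[OF assms(1,8)]
    using dvd_lvl[OF assms(2,3,8)] dvd_lvl[OF assms(4,5,8)] by simp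
qed

definition KS :: "nat \<Rightarrow> zl \<Rightarrow> zl \<Rightarrow> zl \<Rightarrow> zl \<Rightarrow> (rat \<times> rat) set" where
  "KS l \<alpha> \<beta> \<gamma> \<delta> = {v \<in> Tl l \<times> Tl l. \<forall>m. lv l m (fst v) \<and> lv l m (snd v) \<longrightarrow>
      KC l \<alpha> \<beta> \<gamma> \<delta> m (crd l m (fst v)) (crd l m (snd v))}"

lemma KS_iff: assumes "l > 0" "\<alpha> \<in> Zl l" "\<beta> \<in> Zl l" "\<gamma> \<in> Zl l" "\<delta> \<in> Zl l"
  "v \<in> Tl l \<times> Tl l" "lv l m (fst v)" "lv l m (snd v)"
  shows "v \<in> KS l \<alpha> \<beta> \<gamma> \<delta> \<longleftrightarrow> KC l \<alpha> \<beta> \<gamma> \<delta> m (crd l m (fst v)) (crd l m (snd v))"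
proof -
  define k where "k = max (lden l (fst v)) (lden l (snd v))"
  have t: "fst v \<in> Tl l" "snd v \<in> Tl l" using assms(6) by auto
  have lk: "lv l k (fst v)" "lv l k (snd v)" using lden_le_iff[OF t(1) assms(1), of k] lden_le_iff[OF t(2) assms(1), of k] unfolding k_def by auto
  have km: "k \<le> m'" if "lv l m' (fst v)" "lv l m' (snd v)" for m'
    unfolding k_def using lden_le_iff[OF t(1) assms(1)] lden_le_iff[OF t(2) assms(1)] that by auto
  have L: "KC l \<alpha> \<beta> \<gamma> \<delta> m' (crd l m' (fst v)) (crd l m' (snd v)) \<longleftrightarrow> KC l \<alpha> \<beta> \<gamma> \<delta> k (crd l k (fst v)) (crd l k (snd v))"
    if "lv l m' (fst v)" "lv l m' (snd v)" for m'
    using KC_level[OF assms(1-5) lk km[OF that]] .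
  have D: "v \<in> KS l \<alpha> \<beta> \<gamma> \<delta> \<longleftrightarrow> (\<forall>m'. lv l m' (fst v) \<and> lv l m' (snd v) \<longrightarrow> KC l \<alpha> \<beta> \<gamma> \<delta> m' (crd l m' (fst v)) (crd l m' (snd v)))"
    using assms(6) unfolding KS_def by blast
  show ?thesis
  proof
    assume "v \<in> KS l \<alpha> \<beta> \<gamma> \<delta>" then show "KC l \<alpha> \<beta> \<gamma> \<delta> m (crd l m (fst v)) (crd l m (snd v))"
      using D assms(7,8) by blast
  next
    assume "KC l \<alpha> \<beta> \<gamma> \<delta> m (crd l m (fst v)) (crd l m (snd v))"
    then have "KC l \<alpha> \<beta> \<gamma> \<delta> k (crd l k (fst v)) (crd l k (snd v))" using L[OF assms(7,8)] by blast
    then show "v \<in> KS l \<alpha> \<beta> \<gamma> \<delta>" using D L by blast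
  qed
qed

lemma mact_zero: assumes "l > 0" "v \<in> Tl l \<times> Tl l"
  shows "mact l (\<alpha>, \<beta>, \<gamma>, \<delta>) v = (0, 0) \<longleftrightarrow>
     KC l \<alpha> \<beta> \<gamma> \<delta> (max (lden l (fst v)) (lden l (snd v))) (crd l (max (lden l (fst v)) (lden l (snd v))) (fst v)) (crd l (max (lden l (fst v)) (lden l (snd v))) (snd v))"
  by (simp add: mact_def Let_def KC_def crd_def div_Ints_iff[OF assms(1)] del: of_int_add of_int_mult)

lemma kerMI_KS: assumes "l > 0" "(a, b, c, d) \<in> Mat2 l"
  shows "kerMI l (a, b, c, d) = KS l (zsub l a (zconst l 1)) (zsub l b (zconst l 0)) (zsub l c (zconst l 0)) (zsub l d (zconst l 1))"
proof -
  have Z: "zsub l a (zconst l 1) \<in> Zl l" "zsub l b (zconst l 0) \<in> Zl l" "zsub l c (zconst l 0) \<in> Zl l" "zsub l d (zconst l 1) \<in> Zl l"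
    using assms by (auto simp: Mat2_def intro!: zsub_Zl zconst_Zl)
  have ms: "msub l (a, b, c, d) (mid l) = (zsub l a (zconst l 1), zsub l b (zconst l 0), zsub l c (zconst l 0), zsub l d (zconst l 1))"
    by (simp add: msub_def mid_def)
  show ?thesis
  proof (intro equalityI subsetI)
    fix v assume "v \<in> kerMI l (a, b, c, d)"
    then have v: "v \<in> Tl l \<times> Tl l" and z: "mact l (msub l (a, b, c, d) (mid l)) v = (0, 0)" by (auto simp: kerMI_def)
    have t: "fst v \<in> Tl l" "snd v \<in> Tl l" using v by auto
    have lk: "lv l (max (lden l (fst v)) (lden l (snd v))) (fst v)" "lv l (max (lden l (fst v)) (lden l (snd v))) (snd v)"
      using lden_le_iff[OF t(1) assms(1), of "max (lden l (fst v)) (lden l (snd v))"] lden_le_iff[OF t(2) assms(1), of "max (lden l (fst v)) (lden l (snd v))"] by auto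
    show "v \<in> KS l (zsub l a (zconst l 1)) (zsub l b (zconst l 0)) (zsub l c (zconst l 0)) (zsub l d (zconst l 1))"
      using KS_iff[OF assms(1) Z v lk] mact_zero[OF assms(1) v] z unfolding ms by simp
  next
    fix v assume a: "v \<in> KS l (zsub l a (zconst l 1)) (zsub l b (zconst l 0)) (zsub l c (zconst l 0)) (zsub l d (zconst l 1))"
    then have v: "v \<in> Tl l \<times> Tl l" by (simp add: KS_def)
    have t: "fst v \<in> Tl l" "snd v \<in> Tl l" using v by auto
    have lk: "lv l (max (lden l (fst v)) (lden l (snd v))) (fst v)" "lv l (max (lden l (fst v)) (lden l (snd v))) (snd v)"
      using lden_le_iff[OF t(1) assms(1), of "max (lden l (fst v)) (lden l (snd v))"] lden_le_iff[OF t(2) assms(1), of "max (lden l (fst v)) (lden l (snd v))"] by auto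
    show "v \<in> kerMI l (a, b, c, d)"
      using KS_iff[OF assms(1) Z v lk] mact_zero[OF assms(1) v] a v unfolding ms kerMI_def by simp
  qed
qed


lemma frac_lv_add: assumes "l > 0" "lv l m q1" "lv l m q2"
  shows "frac (q1 + q2) = of_int ((crd l m q1 + crd l m q2) mod int l ^ m) / of_nat (l ^ m)"
proof -
  have eq: "q1 + q2 = of_int (crd l m q1 + crd l m q2) / of_nat (l ^ m)"
    using lv_crd_eq[OF assms(2)] lv_crd_eq[OF assms(3)] assms(1) by (simp add: field_simps)
  show ?thesis unfolding eq by (rule frac_div_mod[OF assms(1)])
qed

lemma frac_lv_smul: assumes "l > 0" "lv l m q"
  shows "frac (of_nat n * q) = of_int ((int n * crd l m q) mod int l ^ m) / of_nat (l ^ m)"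
proof -
  have eq: "of_nat n * q = of_int (int n * crd l m q) / of_nat (l ^ m)"
    using lv_crd_eq[OF assms(2)] assms(1) by (simp add: field_simps)
  show ?thesis unfolding eq by (rule frac_div_mod[OF assms(1)])
qed

lemma dvd_mod_comb: fixes L x y X Y :: int
  shows "L dvd x * (X mod L) + y * (Y mod L) \<longleftrightarrow> L dvd x * X + y * Y"
proof -
  have "(x * (X mod L) + y * (Y mod L)) mod L = (x * X + y * Y) mod L"
    by (metis mod_add_cong mod_mult_right_eq)
  then show ?thesis by (simp add: dvd_eq_mod_eq_0)
qed

lemma KC_mod: "KC l \<alpha> \<beta> \<gamma> \<delta> m (X mod int l ^ m) (Y mod int l ^ m) \<longleftrightarrow> KC l \<alpha> \<beta> \<gamma> \<delta> m X Y"
  unfolding KC_def dvd_mod_comb ..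

lemma mk_KS: assumes "l > 0" "\<alpha> \<in> Zl l" "\<beta> \<in> Zl l" "\<gamma> \<in> Zl l" "\<delta> \<in> Zl l"
  shows "(of_int (X mod int l ^ m) / of_nat (l ^ m), of_int (Y mod int l ^ m) / of_nat (l ^ m)) \<in> KS l \<alpha> \<beta> \<gamma> \<delta>
     \<longleftrightarrow> KC l \<alpha> \<beta> \<gamma> \<delta> m X Y"
proof -
  have p: "int l ^ m > 0" using assms(1) by simp
  have X: "0 \<le> X mod int l ^ m" "X mod int l ^ m < int l ^ m" and Y: "0 \<le> Y mod int l ^ m" "Y mod int l ^ m < int l ^ m"
    using p by auto
  note mx = mk_Tl[OF X assms(1)] and my = mk_Tl[OF Y assms(1)]
  show ?thesis using KS_iff[OF assms, of "(of_int (X mod int l ^ m) / of_nat (l ^ m), of_int (Y mod int l ^ m) / of_nat (l ^ m))" m]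
    mx my KC_mod by simp
qed

lemma KS_sub: "KS l \<alpha> \<beta> \<gamma> \<delta> \<subseteq> Tl l \<times> Tl l" by (auto simp: KS_def)

lemma common_level: assumes "l > 0" "v \<in> Tl l \<times> Tl l" "w \<in> Tl l \<times> Tl l"
  shows "\<exists>m. lv l m (fst v) \<and> lv l m (snd v) \<and> lv l m (fst w) \<and> lv l m (snd w)"
proof -
  define m where "m = max (max (lden l (fst v)) (lden l (snd v))) (max (lden l (fst w)) (lden l (snd w)))"
  have "fst v \<in> Tl l" "snd v \<in> Tl l" "fst w \<in> Tl l" "snd w \<in> Tl l" using assms by auto
  then show ?thesis using lden_le_iff[OF _ assms(1), of _ m] unfolding m_def
    by (metis max.cobounded1 max.cobounded2 max.coboundedI1 max.coboundedI2)
qed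

lemma KS_add: assumes "l > 0" "\<alpha> \<in> Zl l" "\<beta> \<in> Zl l" "\<gamma> \<in> Zl l" "\<delta> \<in> Zl l"
  and v: "v \<in> KS l \<alpha> \<beta> \<gamma> \<delta>" and w: "w \<in> KS l \<alpha> \<beta> \<gamma> \<delta>"
  shows "(frac (fst v + fst w), frac (snd v + snd w)) \<in> KS l \<alpha> \<beta> \<gamma> \<delta>"
proof -
  have vt: "v \<in> Tl l \<times> Tl l" and wt: "w \<in> Tl l \<times> Tl l" using v w KS_sub[of l \<alpha> \<beta> \<gamma> \<delta>] by blast+
  obtain m where m: "lv l m (fst v)" "lv l m (snd v)" "lv l m (fst w)" "lv l m (snd w)"
    using common_level[OF assms(1) vt wt] by blast
  have kv: "KC l \<alpha> \<beta> \<gamma> \<delta> m (crd l m (fst v)) (crd l m (snd v))" using KS_iff[OF assms(1-5) vt m(1,2)] v by blast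
  have kw: "KC l \<alpha> \<beta> \<gamma> \<delta> m (crd l m (fst w)) (crd l m (snd w))" using KS_iff[OF assms(1-5) wt m(3,4)] w by blast
  have "KC l \<alpha> \<beta> \<gamma> \<delta> m (crd l m (fst v) + crd l m (fst w)) (crd l m (snd v) + crd l m (snd w))"
  proof -
    have e: "x * (U1 + U2) + y * (W1 + W2) = (x * U1 + y * W1) + (x * U2 + y * W2)" for x y U1 U2 W1 W2 :: int
      by (simp add: algebra_simps)
    show ?thesis using kv kw unfolding KC_def e by (simp add: dvd_add)
  qed
  then show ?thesis
    unfolding frac_lv_add[OF assms(1) m(1,3)] frac_lv_add[OF assms(1) m(2,4)] mk_KS[OF assms(1-5)] .
qed

lemma KS_smul: assumes "l > 0" "\<alpha> \<in> Zl l" "\<beta> \<in> Zl l" "\<gamma> \<in> Zl l" "\<delta> \<in> Zl l"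
  and v: "v \<in> KS l \<alpha> \<beta> \<gamma> \<delta>"
  shows "(frac (of_nat n * fst v), frac (of_nat n * snd v)) \<in> KS l \<alpha> \<beta> \<gamma> \<delta>"
proof -
  have vt: "v \<in> Tl l \<times> Tl l" using v KS_sub[of l \<alpha> \<beta> \<gamma> \<delta>] by blast
  obtain m where m: "lv l m (fst v)" "lv l m (snd v)"
    using common_level[OF assms(1) vt vt] by blast
  have kv: "KC l \<alpha> \<beta> \<gamma> \<delta> m (crd l m (fst v)) (crd l m (snd v))" using KS_iff[OF assms(1-5) vt m(1,2)] v by blast
  have "KC l \<alpha> \<beta> \<gamma> \<delta> m (int n * crd l m (fst v)) (int n * crd l m (snd v))"
  proof -
    have e: "x * (int n * U) + y * (int n * W) = int n * (x * U + y * W)" for x y U W :: int by (simp add: algebra_simps)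
    show ?thesis using kv unfolding KC_def e by simp
  qed
  then show ?thesis
    unfolding frac_lv_smul[OF assms(1) m(1)] frac_lv_smul[OF assms(1) m(2)] mk_KS[OF assms(1-5)] .
qed


definition Target :: "nat \<Rightarrow> nat \<Rightarrow> nat \<Rightarrow> (int \<times> int) monoid" where
  "Target l a b = DirProd (integer_mod_group (l ^ a)) (integer_mod_group (l ^ (a + b)))"

lemma frac_frac_add: "frac (frac x + y) = frac (x + (y::rat))"
proof -
  have e: "frac x + y = (x + y) + of_int (- \<lfloor>x\<rfloor>)" by (simp add: frac_def)
  show ?thesis by (simp only: e frac_add_of_int_right)
qed

lemma kergrp_pow: assumes "v \<in> Tl l \<times> Tl l"
  shows "v [^]\<^bsub>kergrp l M\<^esub> n = (frac (of_nat n * fst v), frac (of_nat n * snd v))"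
proof (induction n)
  case 0 then show ?case by (simp add: kergrp_def)
next
  case (Suc n)
  show ?case using Suc by (simp add: kergrp_def frac_frac_add algebra_simps)
qed

lemma iso_exp: fixes N :: nat
  assumes h: "h \<in> iso K H" and gH: "group H"
    and expH: "\<And>y. y \<in> carrier H \<Longrightarrow> y [^]\<^bsub>H\<^esub> N = \<one>\<^bsub>H\<^esub>"
    and one: "\<one>\<^bsub>K\<^esub> \<in> carrier K" "\<one>\<^bsub>K\<^esub> \<otimes>\<^bsub>K\<^esub> \<one>\<^bsub>K\<^esub> = \<one>\<^bsub>K\<^esub>"
    and cl: "\<And>x y. x \<in> carrier K \<Longrightarrow> y \<in> carrier K \<Longrightarrow> x \<otimes>\<^bsub>K\<^esub> y \<in> carrier K"
    and x: "x \<in> carrier K"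
  shows "x [^]\<^bsub>K\<^esub> N = \<one>\<^bsub>K\<^esub>"
proof -
  have hom: "h \<in> hom K H" and inj: "inj_on h (carrier K)" using h by (auto simp: iso_def bij_betw_def)
  have hmul: "h (a \<otimes>\<^bsub>K\<^esub> b) = h a \<otimes>\<^bsub>H\<^esub> h b" if "a \<in> carrier K" "b \<in> carrier K" for a b
    using hom that by (simp add: hom_def)
  have hc: "h a \<in> carrier H" if "a \<in> carrier K" for a using hom that by (auto simp: hom_def)
  have h1: "h \<one>\<^bsub>K\<^esub> = \<one>\<^bsub>H\<^esub>"
  proof -
    have "h \<one>\<^bsub>K\<^esub> = h \<one>\<^bsub>K\<^esub> \<otimes>\<^bsub>H\<^esub> h \<one>\<^bsub>K\<^esub>" using hmul[OF one(1) one(1)] one(2) by simp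
    then show ?thesis using group.l_cancel_one'[OF gH hc[OF one(1)] hc[OF one(1)]] by simp
  qed
  have pc: "x [^]\<^bsub>K\<^esub> (n::nat) \<in> carrier K" for n
    by (induction n) (auto simp: one x cl)
  have hp: "h (x [^]\<^bsub>K\<^esub> n) = h x [^]\<^bsub>H\<^esub> (n::nat)" for n
  proof (induction n)
    case 0 then show ?case using h1 by simp
  next
    case (Suc n) then show ?case using hmul[OF pc x] by simp
  qed
  have "h (x [^]\<^bsub>K\<^esub> N) = h \<one>\<^bsub>K\<^esub>" using hp expH[OF hc[OF x]] h1 by simp
  then show ?thesis using inj pc one(1) by (meson inj_onD)
qed

lemma DirProd_pow: "(x, y) [^]\<^bsub>G \<times>\<times> H\<^esub> (n::nat) = (x [^]\<^bsub>G\<^esub> n, y [^]\<^bsub>H\<^esub> n)"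
  by (induction n) auto

lemma Target_group: "group (Target l a b)"
  unfolding Target_def by (intro DirProd_group group_integer_mod_group)

lemma Target_exp: assumes "y \<in> carrier (Target l a b)"
  shows "y [^]\<^bsub>Target l a b\<^esub> (l ^ (a + b)) = \<one>\<^bsub>Target l a b\<^esub>"
proof -
  obtain y1 y2 where y: "y = (y1, y2)" by (cases y)
  have d1: "int (l ^ a) dvd int (l ^ (a + b)) * y1" by (simp add: power_add)
  have d2: "int (l ^ (a + b)) dvd int (l ^ (a + b)) * y2" by simp
  show ?thesis unfolding Target_def y DirProd_pow pow_integer_mod_group
    using d1 d2 by (simp del: of_nat_power)
qed


lemma lv_frac_scale: assumes "l > 0"
  shows "lv l j (frac (of_nat (l ^ i) * q)) \<longleftrightarrow> lv l (j + i) q"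
proof -
  have e1: "frac (of_nat (l ^ i) * q) * of_nat (l ^ j) = q * of_nat (l ^ (j + i)) - of_int (\<lfloor>of_nat (l ^ i) * q\<rfloor> * int (l ^ j))"
    by (simp add: frac_def algebra_simps power_add)
  have "of_int (\<lfloor>of_nat (l ^ i) * q\<rfloor> * int (l ^ j)) \<in> (\<int> :: rat set)" by simp
  then show ?thesis unfolding lv_def e1 by (simp add: diff_in_Ints_iff_right)
qed

lemma zero_KS: assumes "l > 0" "\<alpha> \<in> Zl l" "\<beta> \<in> Zl l" "\<gamma> \<in> Zl l" "\<delta> \<in> Zl l"
  shows "(0, 0) \<in> KS l \<alpha> \<beta> \<gamma> \<delta>"
  using mk_KS[OF assms, of 0 0 0] by (simp add: KC_def)

definition ents :: "nat \<Rightarrow> mat2 \<Rightarrow> zl \<times> zl \<times> zl \<times> zl" where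
  "ents l M = (case M of (a, b, c, d) \<Rightarrow> (zsub l a (zconst l 1), zsub l b (zconst l 0), zsub l c (zconst l 0), zsub l d (zconst l 1)))"

lemma ents_Zl: assumes "l > 0" "M \<in> Mat2 l" "ents l M = (\<alpha>, \<beta>, \<gamma>, \<delta>)"
  shows "\<alpha> \<in> Zl l" "\<beta> \<in> Zl l" "\<gamma> \<in> Zl l" "\<delta> \<in> Zl l"
  using assms by (auto simp: ents_def Mat2_def intro!: zsub_Zl zconst_Zl split: prod.splits)

lemma kerMI_ents: assumes "l > 0" "M \<in> Mat2 l" "ents l M = (\<alpha>, \<beta>, \<gamma>, \<delta>)"
  shows "kerMI l M = KS l \<alpha> \<beta> \<gamma> \<delta>"
proof -
  obtain a b c d where M: "M = (a, b, c, d)" by (cases M)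
  show ?thesis using kerMI_KS[OF assms(1)] assms(2,3) unfolding M ents_def by simp
qed

lemma kerMI_exp: assumes "l > 0" "M \<in> Mat2 l" "kergrp l M \<cong> Target l a b" "v \<in> kerMI l M"
  shows "lv l (a + b) (fst v) \<and> lv l (a + b) (snd v)"
proof -
  obtain \<alpha> \<beta> \<gamma> \<delta> where E: "ents l M = (\<alpha>, \<beta>, \<gamma>, \<delta>)" by (cases "ents l M")
  note Z = ents_Zl[OF assms(1,2) E]
  have car: "carrier (kergrp l M) = KS l \<alpha> \<beta> \<gamma> \<delta>" using kerMI_ents[OF assms(1,2) E] by (simp add: kergrp_def)
  obtain h where h: "h \<in> iso (kergrp l M) (Target l a b)" using assms(3) by (auto simp: is_iso_def)
  have vt: "v \<in> Tl l \<times> Tl l" using assms(4) by (auto simp: kerMI_def)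
  have "v [^]\<^bsub>kergrp l M\<^esub> (l ^ (a + b)) = \<one>\<^bsub>kergrp l M\<^esub>"
  proof (rule iso_exp[OF h Target_group Target_exp])
    show "\<one>\<^bsub>kergrp l M\<^esub> \<in> carrier (kergrp l M)" unfolding car using zero_KS[OF assms(1) Z] by (simp add: kergrp_def)
    show "\<one>\<^bsub>kergrp l M\<^esub> \<otimes>\<^bsub>kergrp l M\<^esub> \<one>\<^bsub>kergrp l M\<^esub> = \<one>\<^bsub>kergrp l M\<^esub>" by (simp add: kergrp_def)
    show "x \<otimes>\<^bsub>kergrp l M\<^esub> y \<in> carrier (kergrp l M)" if "x \<in> carrier (kergrp l M)" "y \<in> carrier (kergrp l M)" for x y
      using KS_add[OF assms(1) Z, of x y] that unfolding car by (simp add: kergrp_def)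
    show "v \<in> carrier (kergrp l M)" using assms(4) by (simp add: kergrp_def)
  qed
  then have "frac (of_nat (l ^ (a + b)) * fst v) = 0" "frac (of_nat (l ^ (a + b)) * snd v) = 0"
    unfolding kergrp_pow[OF vt] by (simp_all add: kergrp_def)
  then show ?thesis unfolding lv_def frac_eq_0_iff by (simp add: mult.commute)
qed

lemma KS_transfer:
  assumes l: "l > 0" and Z: "\<alpha> \<in> Zl l" "\<beta> \<in> Zl l" "\<gamma> \<in> Zl l" "\<delta> \<in> Zl l"
    and Z': "\<alpha>' \<in> Zl l" "\<beta>' \<in> Zl l" "\<gamma>' \<in> Zl l" "\<delta>' \<in> Zl l"
    and eq: "\<alpha> K = \<alpha>' K" "\<beta> K = \<beta>' K" "\<gamma> K = \<gamma>' K" "\<delta> K = \<delta>' K"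
    and K: "K = e + 1"
    and ex: "\<And>v. v \<in> KS l \<alpha> \<beta> \<gamma> \<delta> \<Longrightarrow> lv l e (fst v) \<and> lv l e (snd v)"
  shows "KS l \<alpha>' \<beta>' \<gamma>' \<delta>' = KS l \<alpha> \<beta> \<gamma> \<delta>"
proof -
  have step2: "v \<in> KS l \<alpha> \<beta> \<gamma> \<delta> \<longleftrightarrow> v \<in> KS l \<alpha>' \<beta>' \<gamma>' \<delta>'"
    if "v \<in> Tl l \<times> Tl l" "lv l K (fst v)" "lv l K (snd v)" for v
    using KS_iff[OF l Z that] KS_iff[OF l Z' that] eq unfolding KC_def by simp
  have step3: "lv l K (fst v) \<and> lv l K (snd v)" if v: "v \<in> KS l \<alpha>' \<beta>' \<gamma>' \<delta>'" for v
  proof -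
    have vt: "v \<in> Tl l \<times> Tl l" using v KS_sub[of l \<alpha>' \<beta>' \<gamma>' \<delta>'] by blast
    then have t: "fst v \<in> Tl l" "snd v \<in> Tl l" by auto
    define k where "k = max (lden l (fst v)) (lden l (snd v))"
    have lk: "lv l k (fst v)" "lv l k (snd v)"
      using lden_le_iff[OF t(1) l, of k] lden_le_iff[OF t(2) l, of k] unfolding k_def by auto
    show ?thesis
    proof (cases "k \<le> K")
      case True then show ?thesis using lv_mono lk by blast
    next
      case False
      define w where "w = (frac (of_nat (l ^ (k - K)) * fst v), frac (of_nat (l ^ (k - K)) * snd v))"
      have w': "w \<in> KS l \<alpha>' \<beta>' \<gamma>' \<delta>'" unfolding w_def by (rule KS_smul[OF l Z' v])
      have wt: "w \<in> Tl l \<times> Tl l" using w' KS_sub[of l \<alpha>' \<beta>' \<gamma>' \<delta>'] by blast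
      have kk: "K + (k - K) = k" using False by simp
      have wK: "lv l K (fst w)" "lv l K (snd w)" unfolding w_def using lv_frac_scale[OF l] lk kk by simp_all
      have "w \<in> KS l \<alpha> \<beta> \<gamma> \<delta>" using step2[OF wt wK] w' by simp
      then have "lv l e (fst w)" "lv l e (snd w)" using ex by blast+
      then have "lv l (e + (k - K)) (fst v)" "lv l (e + (k - K)) (snd v)"
        unfolding w_def using lv_frac_scale[OF l] by simp_all
      moreover have "e + (k - K) < k" using False K by simp
      ultimately have "lden l (fst v) < k" "lden l (snd v) < k"
        using lden_le_iff[OF t(1) l] lden_le_iff[OF t(2) l] by (meson le_less_trans)+
      then show ?thesis unfolding k_def by simp
    qed
  qed
  show ?thesis
  proof (intro equalityI subsetI)
    fix v assume v: "v \<in> KS l \<alpha>' \<beta>' \<gamma>' \<delta>'"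
    have vt: "v \<in> Tl l \<times> Tl l" using v KS_sub[of l \<alpha>' \<beta>' \<gamma>' \<delta>'] by blast
    show "v \<in> KS l \<alpha> \<beta> \<gamma> \<delta>" using step2[OF vt] step3[OF v] v by blast
  next
    fix v assume v: "v \<in> KS l \<alpha> \<beta> \<gamma> \<delta>"
    have vt: "v \<in> Tl l \<times> Tl l" using v KS_sub[of l \<alpha> \<beta> \<gamma> \<delta>] by blast
    have "lv l K (fst v)" "lv l K (snd v)" using ex[OF v] lv_mono[of l e _ K] K by auto
    then show "v \<in> KS l \<alpha>' \<beta>' \<gamma>' \<delta>'" using step2[OF vt] v by blast
  qed
qed

lemma red_eq_lower: assumes "M \<in> Mat2 l" "N \<in> Mat2 l" "red M n = red N n" "k \<le> n"
  shows "red M k = red N k"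
proof -
  obtain a b c d where M: "M = (a, b, c, d)" by (cases M)
  obtain a' b' c' d' where N: "N = (a', b', c', d')" by (cases N)
  show ?thesis using assms unfolding M N red_def Mat2_def
    by (auto simp: Zl_mod[symmetric])
qed

lemma kerMI_transfer: assumes l: "l > 0" and M: "M \<in> Mat2 l" and N: "N \<in> Mat2 l"
  and iso: "kergrp l M \<cong> Target l a b" and r: "red M n = red N n" and n: "a + b < n"
  shows "kerMI l N = kerMI l M"
proof -
  obtain \<alpha> \<beta> \<gamma> \<delta> where E: "ents l M = (\<alpha>, \<beta>, \<gamma>, \<delta>)" by (cases "ents l M")
  obtain \<alpha>' \<beta>' \<gamma>' \<delta>' where E': "ents l N = (\<alpha>', \<beta>', \<gamma>', \<delta>')" by (cases "ents l N")
  have rK: "red M (a + b + 1) = red N (a + b + 1)" using red_eq_lower[OF M N r] n by simp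
  obtain a1 b1 c1 d1 where Mq: "M = (a1, b1, c1, d1)" by (cases M)
  obtain a2 b2 c2 d2 where Nq: "N = (a2, b2, c2, d2)" by (cases N)
  have eqs: "\<alpha> (a + b + 1) = \<alpha>' (a + b + 1)" "\<beta> (a + b + 1) = \<beta>' (a + b + 1)"
    "\<gamma> (a + b + 1) = \<gamma>' (a + b + 1)" "\<delta> (a + b + 1) = \<delta>' (a + b + 1)"
    using E E' rK unfolding Mq Nq ents_def red_def by (auto simp: zsub_def)
  have "KS l \<alpha>' \<beta>' \<gamma>' \<delta>' = KS l \<alpha> \<beta> \<gamma> \<delta>"
  proof (rule KS_transfer[OF l ents_Zl[OF l M E] ents_Zl[OF l N E'] eqs])
    show "a + b + 1 = (a + b) + 1" by simp
    show "lv l (a + b) (fst v) \<and> lv l (a + b) (snd v)" if "v \<in> KS l \<alpha> \<beta> \<gamma> \<delta>" for v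
      using kerMI_exp[OF l M iso] that kerMI_ents[OF l M E] by simp
  qed
  then show ?thesis using kerMI_ents[OF l M E] kerMI_ents[OF l N E'] by simp
qed

lemma Mab_fiber: assumes l: "l > 0" and G: "G \<subseteq> Mat2 l" and M: "M \<in> Mab l G a b" and N: "N \<in> G"
  and r: "red N n = red M n" and n: "a + b < n"
  shows "N \<in> Mab l G a b"
proof -
  have MG: "M \<in> G" and iso: "kergrp l M \<cong> Target l a b" using M by (auto simp: Mab_def Target_def)
  have "kerMI l N = kerMI l M" using kerMI_transfer[OF l _ _ iso r[symmetric] n] MG N G by blast
  then have "kergrp l N = kergrp l M" by (simp add: kergrp_def)
  then show ?thesis using N iso by (simp add: Mab_def Target_def)
qed


lemma red_mmul_right: "red N n = red N' n \<Longrightarrow> red (mmul l M N) n = red (mmul l M N') n"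
  by (cases M; cases N; cases N') (simp add: red_def mmul_def zadd_def zmul_def)

lemma red_mmul_left: "red M n = red M' n \<Longrightarrow> red (mmul l M N) n = red (mmul l M' N) n"
  by (cases M; cases N; cases M') (simp add: red_def mmul_def zadd_def zmul_def)

definition fib :: "mat2 set \<Rightarrow> nat \<Rightarrow> int \<times> int \<times> int \<times> int \<Rightarrow> mat2 set" where
  "fib G n t = {N \<in> G. red N n = t}"

context
  fixes l :: nat and G :: "mat2 set" and \<mu> :: "mat2 measure"
  assumes l: "prime l" and sg: "subgroup G (GL2grp l)" and hp: "haar_prob l G \<mu>"
begin

lemma l0: "l > 0" using l prime_gt_0_nat by blast
lemma l1: "l > 1" using l prime_gt_1_nat by blast

lemma grp: "group (GL2grp l)" using GL2grp_group l0 .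

lemma GM: "G \<subseteq> Mat2 l" using subgroup.subset[OF sg] GL2_Mat2 by auto

lemma PS: "prob_space \<mu>" and spaceG: "space \<mu> = G"
  and setsG: "sets \<mu> = sigma_sets G {U. lopen_in l G U}"
  using hp by (auto simp: haar_prob_def)

lemma inv_facts: assumes "M \<in> G"
  shows "inv\<^bsub>GL2grp l\<^esub> M \<in> G" "mmul l M (inv\<^bsub>GL2grp l\<^esub> M) = mid l" "mmul l (inv\<^bsub>GL2grp l\<^esub> M) M = mid l"
proof -
  have c: "M \<in> carrier (GL2grp l)" using assms subgroup.subset[OF sg] by auto
  show "inv\<^bsub>GL2grp l\<^esub> M \<in> G" using subgroup.m_inv_closed[OF sg assms] .
  show "mmul l M (inv\<^bsub>GL2grp l\<^esub> M) = mid l" using group.r_inv[OF grp c] by simp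
  show "mmul l (inv\<^bsub>GL2grp l\<^esub> M) M = mid l" using group.l_inv[OF grp c] by simp
qed

lemma mulG: "M \<in> G \<Longrightarrow> N \<in> G \<Longrightarrow> mmul l M N \<in> G"
  using subgroup.m_closed[OF sg] by simp

lemma midG: "mid l \<in> G"
  using subgroup.one_closed[OF sg] by simp

lemma fib_sets: "fib G n t \<in> sets \<mu>"
proof -
  have "lopen l {N \<in> Mat2 l. red N n = t}" unfolding lopen_def by auto
  then have "lopen_in l G (fib G n t)" unfolding lopen_in_def fib_def using GM by blast
  then show ?thesis unfolding setsG by (auto intro: sigma_sets.Basic)
qed

lemma coset_fib: assumes M: "M \<in> G"
  shows "(\<lambda>x. mmul l M x) ` fib G n (red (mid l) n) = fib G n (red M n)"
proof (intro equalityI subsetI)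
  fix y assume "y \<in> (\<lambda>x. mmul l M x) ` fib G n (red (mid l) n)"
  then obtain x where x: "x \<in> G" "red x n = red (mid l) n" and y: "y = mmul l M x" by (auto simp: fib_def)
  have "red y n = red (mmul l M (mid l)) n" unfolding y by (rule red_mmul_right[OF x(2)])
  also have "\<dots> = red M n" using mid_right M GM by (metis subsetD)
  finally show "y \<in> fib G n (red M n)" using mulG[OF M x(1)] y by (simp add: fib_def)
next
  fix y assume "y \<in> fib G n (red M n)"
  then have y: "y \<in> G" "red y n = red M n" by (auto simp: fib_def)
  define x where "x = mmul l (inv\<^bsub>GL2grp l\<^esub> M) y"
  note I = inv_facts[OF M]
  have xG: "x \<in> G" unfolding x_def using mulG[OF I(1) y(1)] .
  have "red x n = red (mmul l (inv\<^bsub>GL2grp l\<^esub> M) M) n" unfolding x_def by (rule red_mmul_right[OF y(2)])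
  then have rx: "red x n = red (mid l) n" using I(3) by simp
  have "mmul l M x = mmul l (mmul l M (inv\<^bsub>GL2grp l\<^esub> M)) y" unfolding x_def by (simp add: mmul_assoc)
  also have "\<dots> = y" using I(2) mid_left y(1) GM by (metis prod_cases4 subsetD)
  finally show "y \<in> (\<lambda>x. mmul l M x) ` fib G n (red (mid l) n)" using xG rx by (force simp: fib_def)
qed

lemma fib_measure: assumes "t \<in> img G n"
  shows "measure \<mu> (fib G n t) = measure \<mu> (fib G n (red (mid l) n))"
proof -
  obtain M where M: "M \<in> G" "t = red M n" using assms by (auto simp: img_def)
  have "emeasure \<mu> ((\<lambda>x. mmul l M x) ` fib G n (red (mid l) n)) = emeasure \<mu> (fib G n (red (mid l) n))"
    using hp M(1) fib_sets unfolding haar_prob_def by blast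
  then show ?thesis using coset_fib[OF M(1)] M(2) by (simp add: measure_def)
qed

lemma img_finite: "finite (img X n)" if "X \<subseteq> Mat2 l"
proof -
  have "img X n \<subseteq> {0..<int l ^ n} \<times> {0..<int l ^ n} \<times> {0..<int l ^ n} \<times> {0..<int l ^ n}"
    using that by (auto simp: img_def red_def Mat2_def Zl_bounds)
  then show ?thesis by (rule finite_subset) auto
qed

lemma union_fib: assumes "X \<subseteq> G" "\<And>M N. M \<in> X \<Longrightarrow> N \<in> G \<Longrightarrow> red N n = red M n \<Longrightarrow> N \<in> X"
  shows "X = (\<Union>t\<in>img X n. fib G n t)"
  using assms by (auto simp: img_def fib_def)

lemma measure_union_fib: assumes "X \<subseteq> G" "\<And>M N. M \<in> X \<Longrightarrow> N \<in> G \<Longrightarrow> red N n = red M n \<Longrightarrow> N \<in> X"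
  shows "measure \<mu> X = real (card (img X n)) * measure \<mu> (fib G n (red (mid l) n))"
    and "X \<in> sets \<mu>"
proof -
  interpret prob_space \<mu> using PS .
  have fin: "finite (img X n)" using img_finite assms(1) GM by blast
  have disj: "disjoint_family_on (fib G n) (img X n)"
    unfolding disjoint_family_on_def fib_def by auto
  have U: "X = (\<Union>t\<in>img X n. fib G n t)" by (rule union_fib[OF assms])
  have "measure \<mu> (\<Union>t\<in>img X n. fib G n t) = (\<Sum>t\<in>img X n. measure \<mu> (fib G n t))"
    by (rule finite_measure_finite_Union[OF fin _ disj]) (use fib_sets in auto)
  then have "measure \<mu> X = (\<Sum>t\<in>img X n. measure \<mu> (fib G n t))" using U by simp
  also have "\<dots> = (\<Sum>t\<in>img X n. measure \<mu> (fib G n (red (mid l) n)))"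
    apply (rule sum.cong[OF refl])
    apply (rule fib_measure)
    using assms(1) by (auto simp: img_def)
  finally show "measure \<mu> X = real (card (img X n)) * measure \<mu> (fib G n (red (mid l) n))" by simp
  have "(\<Union>t\<in>img X n. fib G n t) \<in> sets \<mu>" using fin fib_sets by auto
  then show "X \<in> sets \<mu>" using U by simp
qed

lemma Gn_measure: "real (card (img G n)) * measure \<mu> (fib G n (red (mid l) n)) = 1"
proof -
  interpret prob_space \<mu> using PS .
  have "measure \<mu> G = 1" using prob_space spaceG by simp
  then show ?thesis using measure_union_fib[of G n] by simp
qed

lemma Mab_measure: assumes "a + b < n"
  shows "measure \<mu> (Mab l G a b) = mu_n l G a b n" and "Mab l G a b \<in> sets \<mu>"
proof -
  have sub: "Mab l G a b \<subseteq> G" by (auto simp: Mab_def)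
  have cl: "N \<in> Mab l G a b" if "M \<in> Mab l G a b" "N \<in> G" "red N n = red M n" for M N
    using Mab_fiber[OF l0 GM that assms] .
  have cpos: "card (img G n) > 0"
    using img_finite[OF GM, of n] midG by (auto simp: img_def card_gt_0_iff)
  have m: "measure \<mu> (fib G n (red (mid l) n)) = 1 / real (card (img G n))"
    using Gn_measure[of n] cpos by (simp add: field_simps)
  show "measure \<mu> (Mab l G a b) = mu_n l G a b n"
    using measure_union_fib(1)[OF sub cl] m by (simp add: mu_n_def)
  show "Mab l G a b \<in> sets \<mu>" using measure_union_fib(2)[OF sub cl] .
qed

lemma Mab_zero: assumes "a + b < n"
  shows "measure \<mu> (Mab l G a b) = 0 \<longleftrightarrow> Mab l G a b = {}"
proof -
  have cpos: "card (img G n) > 0"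
    using img_finite[OF GM, of n] midG by (auto simp: img_def card_gt_0_iff)
  have "Mab l G a b \<subseteq> Mat2 l" using GM by (auto simp: Mab_def)
  then have fin: "finite (img (Mab l G a b) n)" by (rule img_finite)
  have "measure \<mu> (Mab l G a b) = 0 \<longleftrightarrow> card (img (Mab l G a b) n) = 0"
    using Mab_measure(1)[OF assms] cpos by (simp add: mu_n_def)
  also have "\<dots> \<longleftrightarrow> Mab l G a b = {}" using fin by (simp add: img_def)
  finally show ?thesis .
qed

end


lemma int_div_bound: fixes x c d :: int assumes "0 \<le> x" "x < c * d" "c > 0" shows "x div c < d"
proof (rule ccontr)
  assume "\<not> x div c < d"
  then have "c * d \<le> c * (x div c)" using assms(3) by (simp add: mult_left_mono)
  moreover have "x = c * (x div c) + x mod c" by simp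
  moreover have "x mod c < c" "0 \<le> x mod c" using assms(3) by simp_all
  ultimately show False using assms(2) by linarith
qed

lemma div_add_mod_lemma: fixes x1 x2 A B :: int
  assumes "B > 0" "B dvd x1" "B dvd x2"
  shows "((x1 + x2) mod (B * A)) div B = (x1 div B + x2 div B) mod A"
proof -
  obtain y1 y2 where y: "x1 = B * y1" "x2 = B * y2" using assms(2,3) by (auto elim!: dvdE)
  have "(x1 + x2) mod (B * A) = B * ((y1 + y2) mod A)" unfolding y
    by (simp add: distrib_left[symmetric] mod_mult_mult1)
  then show ?thesis using y assms(1) by simp
qed

lemma prime_int_l: "prime l \<Longrightarrow> prime (int l)" by simp

lemma coprime_l_pow: assumes "prime l" "\<not> int l dvd u" shows "coprime u (int l ^ k)"
proof -
  have "coprime (int l) u" using prime_imp_coprime[OF prime_int_l[OF assms(1)] assms(2)] .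
  then show ?thesis by (simp add: coprime_commute)
qed

definition KG :: "(rat \<times> rat) set \<Rightarrow> (rat \<times> rat) monoid" where
  "KG S = \<lparr>carrier = S, monoid.mult = (\<lambda>v w. (frac (fst v + fst w), frac (snd v + snd w))), one = (0, 0)\<rparr>"

lemma kergrp_KG: "kergrp l M = KG (kerMI l M)" by (simp add: kergrp_def KG_def)

lemma KS_bounded:
  assumes l: "l > 0" and Z: "\<alpha> \<in> Zl l" "\<beta> \<in> Zl l" "\<gamma> \<in> Zl l" "\<delta> \<in> Zl l"
    and st: "\<And>v. v \<in> KS l \<alpha> \<beta> \<gamma> \<delta> \<Longrightarrow> lv l (Suc e) (fst v) \<Longrightarrow> lv l (Suc e) (snd v) \<Longrightarrow> lv l e (fst v) \<and> lv l e (snd v)"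
    and v: "v \<in> KS l \<alpha> \<beta> \<gamma> \<delta>"
  shows "lv l e (fst v) \<and> lv l e (snd v)"
proof -
  have vt: "v \<in> Tl l \<times> Tl l" using v KS_sub[of l \<alpha> \<beta> \<gamma> \<delta>] by blast
  then have t: "fst v \<in> Tl l" "snd v \<in> Tl l" by auto
  define k where "k = max (lden l (fst v)) (lden l (snd v))"
  have lk: "lv l k (fst v)" "lv l k (snd v)"
    using lden_le_iff[OF t(1) l, of k] lden_le_iff[OF t(2) l, of k] unfolding k_def by auto
  show ?thesis
  proof (cases "k \<le> e")
    case True then show ?thesis using lv_mono lk by blast
  next
    case False
    define w where "w = (frac (of_nat (l ^ (k - Suc e)) * fst v), frac (of_nat (l ^ (k - Suc e)) * snd v))"
    have w': "w \<in> KS l \<alpha> \<beta> \<gamma> \<delta>" unfolding w_def by (rule KS_smul[OF l Z v])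
    have kk: "Suc e + (k - Suc e) = k" using False by simp
    have wK: "lv l (Suc e) (fst w)" "lv l (Suc e) (snd w)" unfolding w_def using lv_frac_scale[OF l] lk kk by simp_all
    have "lv l e (fst w)" "lv l e (snd w)" using st[OF w' wK] by blast+
    then have "lv l (e + (k - Suc e)) (fst v)" "lv l (e + (k - Suc e)) (snd v)"
      unfolding w_def using lv_frac_scale[OF l] by simp_all
    moreover have "e + (k - Suc e) < k" using False by simp
    ultimately have "lden l (fst v) < k" "lden l (snd v) < k"
      using lden_le_iff[OF t(1) l] lden_le_iff[OF t(2) l] by (meson le_less_trans)+
    then show ?thesis unfolding k_def by simp
  qed
qed


lemma lv_down: assumes "l > 0" "lv l (Suc N) q" "int l dvd crd l (Suc N) q"
  shows "lv l N q"
proof -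
  obtain U' where U: "crd l (Suc N) q = int l * U'" using assms(3) by (auto elim!: dvdE)
  have "of_int (crd l (Suc N) q) = q * of_nat (l ^ Suc N)" using lv_crd_eq[OF assms(2)] .
  then have "of_nat l * of_int U' = of_nat l * (q * of_nat (l ^ N))" unfolding U by (simp add: algebra_simps)
  then have "q * of_nat (l ^ N) = of_int U'" using assms(1) by simp
  then show ?thesis unfolding lv_def by simp
qed

lemma dvd_cancel_pow: assumes "l > 0" shows "int l ^ (a + c) dvd int l ^ a * x \<longleftrightarrow> int l ^ c dvd (x::int)"
proof -
  have "int l ^ (a + c) = int l ^ a * int l ^ c" by (simp add: power_add)
  then show ?thesis using assms by simp
qed

context
  fixes l a b L :: nat and \<alpha> \<beta> \<gamma> \<delta> :: zl
  assumes l: "prime l"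
    and Z: "\<alpha> \<in> Zl l" "\<beta> \<in> Zl l" "\<gamma> \<in> Zl l" "\<delta> \<in> Zl l"
    and L: "L = 2 * a + b + 1"
    and da: "int l ^ a dvd \<alpha> L" "int l ^ a dvd \<beta> L" "int l ^ a dvd \<gamma> L" "int l ^ a dvd \<delta> L"
    and np: "\<not> int l ^ Suc a dvd \<alpha> L"
    and hD: "int l ^ (2 * a + b) dvd \<alpha> L * \<delta> L - \<beta> L * \<gamma> L"
    and hD': "\<not> int l ^ (2 * a + b + 1) dvd \<alpha> L * \<delta> L - \<beta> L * \<gamma> L"
begin

private lemma lpos: "l > 0" using l prime_gt_0_nat by blast
private lemma lint: "prime (int l)" using l by simp
private lemma lgt1: "int l > 1" using l prime_gt_1_nat by auto

private definition "cu = \<alpha> L div int l ^ a"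
private definition "cq = \<beta> L div int l ^ a"
private definition "cr = \<gamma> L div int l ^ a"
private definition "cs = \<delta> L div int l ^ a"
private definition "cD = cu * cs - cq * cr"

private lemma ents_eq: "\<alpha> L = int l ^ a * cu" "\<beta> L = int l ^ a * cq" "\<gamma> L = int l ^ a * cr" "\<delta> L = int l ^ a * cs"
  using da unfolding cu_def cq_def cr_def cs_def by simp_all

private lemma D_eq: "\<alpha> L * \<delta> L - \<beta> L * \<gamma> L = int l ^ (2 * a) * cD"
proof -
  have p: "int l ^ (2 * a) = int l ^ a * int l ^ a" by (simp add: mult_2 power_add)
  show ?thesis unfolding ents_eq cD_def p by (simp add: algebra_simps)
qed

private lemma hb: "int l ^ b dvd cD"
  using hD unfolding D_eq using dvd_cancel_pow[OF lpos, of "2*a" b cD] by simp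

private lemma hb': "\<not> int l ^ Suc b dvd cD"
  using hD' unfolding D_eq using dvd_cancel_pow[OF lpos, of "2*a" "Suc b" cD] by simp

private lemma nu: "\<not> int l dvd cu"
  using np unfolding ents_eq using dvd_cancel_pow[OF lpos, of a 1 cu] by simp

private lemma cop: "coprime cu (int l ^ k)" using coprime_l_pow[OF l nu] .

private lemma KCN: assumes "m \<le> L"
  shows "KC l \<alpha> \<beta> \<gamma> \<delta> m U W \<longleftrightarrow> int l ^ m dvd int l ^ a * (cu * U + cq * W) \<and> int l ^ m dvd int l ^ a * (cr * U + cs * W)"
proof -
  have "KC l \<alpha> \<beta> \<gamma> \<delta> m U W \<longleftrightarrow> int l ^ m dvd \<alpha> L * U + \<beta> L * W \<and> int l ^ m dvd \<gamma> L * U + \<delta> L * W"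
    unfolding KC_def using dvd_lvl[OF Z(1,2) assms] dvd_lvl[OF Z(3,4) assms] by simp
  then show ?thesis unfolding ents_eq by (simp add: algebra_simps)
qed

private lemma step: assumes v: "v \<in> KS l \<alpha> \<beta> \<gamma> \<delta>" and lv: "lv l (Suc (a + b)) (fst v)" "lv l (Suc (a + b)) (snd v)"
  shows "lv l (a + b) (fst v) \<and> lv l (a + b) (snd v)"
proof -
  define U where "U = crd l (Suc (a + b)) (fst v)"
  define W where "W = crd l (Suc (a + b)) (snd v)"
  have vt: "v \<in> Tl l \<times> Tl l" using v KS_sub[of l \<alpha> \<beta> \<gamma> \<delta>] by blast
  have "KC l \<alpha> \<beta> \<gamma> \<delta> (Suc (a + b)) U W" using KS_iff[OF lpos Z vt lv] v unfolding U_def W_def by blast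
  then have "int l ^ (a + Suc b) dvd int l ^ a * (cu * U + cq * W)" "int l ^ (a + Suc b) dvd int l ^ a * (cr * U + cs * W)"
    using KCN[of "Suc (a + b)" U W] L by simp_all
  then have d1: "int l ^ Suc b dvd cu * U + cq * W" and d2: "int l ^ Suc b dvd cr * U + cs * W"
    using dvd_cancel_pow[OF lpos] by blast+
  have "cD * W = cu * (cr * U + cs * W) - cr * (cu * U + cq * W)" unfolding cD_def by (simp add: algebra_simps)
  then have dW: "int l ^ Suc b dvd cD * W" using d1 d2 by (simp add: dvd_diff)
  obtain e where e: "cD = int l ^ b * e" using hb by (auto elim!: dvdE)
  have ne: "\<not> int l dvd e" using hb' unfolding e by simp
  have "int l ^ b * int l dvd int l ^ b * (e * W)" using dW unfolding e by (simp add: algebra_simps)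
  then have "int l dvd e * W" using lpos by simp
  then have lW: "int l dvd W" using ne lint prime_dvd_mult_iff by blast
  have "int l dvd cu * U + cq * W" using d1 by (meson dvd_mult_left dvd_power dvd_trans zero_less_Suc le_refl power_Suc)
  then have "int l dvd cu * U" using lW by (metis dvd_add_right_iff dvd_mult add.commute)
  then have lU: "int l dvd U" using nu lint prime_dvd_mult_iff by blast
  show ?thesis using lv_down[OF lpos lv(1)] lv_down[OF lpos lv(2)] lU lW unfolding U_def W_def by blast
qed

private lemma lvN: assumes "v \<in> KS l \<alpha> \<beta> \<gamma> \<delta>" shows "lv l (a + b) (fst v) \<and> lv l (a + b) (snd v)"
  using KS_bounded[OF lpos Z _ assms] step by blast

private definition "hmap v = (((cu * crd l (a + b) (fst v) + cq * crd l (a + b) (snd v)) mod int l ^ (a + b)) div int l ^ b,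
    crd l (a + b) (snd v))"

private lemma P_eq: "int l ^ (a + b) = int l ^ b * int l ^ a" by (simp add: power_add)

private lemma Xdvd: assumes v: "v \<in> KS l \<alpha> \<beta> \<gamma> \<delta>"
  shows "int l ^ b dvd cu * crd l (a + b) (fst v) + cq * crd l (a + b) (snd v)"
proof -
  have vt: "v \<in> Tl l \<times> Tl l" using v KS_sub[of l \<alpha> \<beta> \<gamma> \<delta>] by blast
  have lv: "lv l (a + b) (fst v)" "lv l (a + b) (snd v)" using lvN[OF v] by auto
  have "KC l \<alpha> \<beta> \<gamma> \<delta> (a + b) (crd l (a + b) (fst v)) (crd l (a + b) (snd v))" using KS_iff[OF lpos Z vt lv] v by blast
  then show ?thesis using KCN[of "a + b"] L dvd_cancel_pow[OF lpos] by simp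
qed

private lemma Xmod_dvd: assumes "int l ^ b dvd X" shows "int l ^ b dvd X mod int l ^ (a + b)"
proof -
  have "int l ^ b dvd int l ^ (a + b)" unfolding P_eq by simp
  then show ?thesis using assms by (simp add: dvd_mod_iff)
qed

private lemma carrier_T: "carrier (Target l a b) = {0..<int l ^ a} \<times> {0..<int l ^ (a + b)}"
  using lpos by (simp add: Target_def carrier_integer_mod_group)

private lemma hmap_carrier: assumes v: "v \<in> KS l \<alpha> \<beta> \<gamma> \<delta>" shows "hmap v \<in> carrier (Target l a b)"
proof -
  have vt: "v \<in> Tl l \<times> Tl l" using v KS_sub[of l \<alpha> \<beta> \<gamma> \<delta>] by blast
  define X where "X = cu * crd l (a + b) (fst v) + cq * crd l (a + b) (snd v)"
  have pb: "int l ^ b > 0" "int l ^ a > 0" "int l ^ (a + b) > 0" using lpos by simp_all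
  have x1: "0 \<le> X mod int l ^ (a + b)" "X mod int l ^ (a + b) < int l ^ b * int l ^ a"
    using pb P_eq by auto
  have "0 \<le> X mod int l ^ (a + b) div int l ^ b" using x1(1) pb(1) by (simp add: pos_imp_zdiv_nonneg_iff)
  moreover have "X mod int l ^ (a + b) div int l ^ b < int l ^ a" using int_div_bound[OF x1 pb(1)] .
  moreover have "0 \<le> crd l (a + b) (snd v)" "crd l (a + b) (snd v) < int l ^ (a + b)" using crd_bounds[of "snd v" l] vt lpos by auto
  ultimately show ?thesis unfolding carrier_T hmap_def X_def by simp
qed

private lemma crd_add: assumes v: "v \<in> KS l \<alpha> \<beta> \<gamma> \<delta>" and w: "w \<in> KS l \<alpha> \<beta> \<gamma> \<delta>"
  shows "crd l (a + b) (frac (fst v + fst w)) = (crd l (a + b) (fst v) + crd l (a + b) (fst w)) mod int l ^ (a + b)"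
    "crd l (a + b) (frac (snd v + snd w)) = (crd l (a + b) (snd v) + crd l (a + b) (snd w)) mod int l ^ (a + b)"
proof -
  have p: "int l ^ (a + b) > 0" using lpos by simp
  have lv: "lv l (a + b) (fst v)" "lv l (a + b) (snd v)" "lv l (a + b) (fst w)" "lv l (a + b) (snd w)"
    using lvN[OF v] lvN[OF w] by auto
  show "crd l (a + b) (frac (fst v + fst w)) = (crd l (a + b) (fst v) + crd l (a + b) (fst w)) mod int l ^ (a + b)"
    unfolding frac_lv_add[OF lpos lv(1,3)] using mk_Tl[OF _ _ lpos, of "(crd l (a + b) (fst v) + crd l (a + b) (fst w)) mod int l ^ (a + b)" "a+b"] p by simp
  show "crd l (a + b) (frac (snd v + snd w)) = (crd l (a + b) (snd v) + crd l (a + b) (snd w)) mod int l ^ (a + b)"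
    unfolding frac_lv_add[OF lpos lv(2,4)] using mk_Tl[OF _ _ lpos, of "(crd l (a + b) (snd v) + crd l (a + b) (snd w)) mod int l ^ (a + b)" "a+b"] p by simp
qed

private lemma hmap_hom: assumes v: "v \<in> KS l \<alpha> \<beta> \<gamma> \<delta>" and w: "w \<in> KS l \<alpha> \<beta> \<gamma> \<delta>"
  shows "hmap (frac (fst v + fst w), frac (snd v + snd w)) = hmap v \<otimes>\<^bsub>Target l a b\<^esub> hmap w"
proof -
  define U1 where "U1 = crd l (a + b) (fst v)"
  define W1 where "W1 = crd l (a + b) (snd v)"
  define U2 where "U2 = crd l (a + b) (fst w)"
  define W2 where "W2 = crd l (a + b) (snd w)"
  define P where "P = int l ^ (a + b)"
  define X1 where "X1 = cu * U1 + cq * W1"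
  define X2 where "X2 = cu * U2 + cq * W2"
  have bP: "P = int l ^ b * int l ^ a" unfolding P_def by (rule P_eq)
  have d1: "int l ^ b dvd X1 mod P" unfolding X1_def U1_def W1_def P_def using Xmod_dvd[OF Xdvd[OF v]] .
  have d2: "int l ^ b dvd X2 mod P" unfolding X2_def U2_def W2_def P_def using Xmod_dvd[OF Xdvd[OF w]] .
  have "(cu * ((U1 + U2) mod P) + cq * ((W1 + W2) mod P)) mod P = (cu * (U1 + U2) + cq * (W1 + W2)) mod P"
    by (metis mod_add_cong mod_mult_right_eq)
  also have "cu * (U1 + U2) + cq * (W1 + W2) = X1 + X2" unfolding X1_def X2_def by (simp add: algebra_simps)
  finally have "(cu * ((U1 + U2) mod P) + cq * ((W1 + W2) mod P)) mod P = (X1 + X2) mod P" .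
  also have "\<dots> = (X1 mod P + X2 mod P) mod P" by (simp add: mod_simps)
  finally have e: "(cu * ((U1 + U2) mod P) + cq * ((W1 + W2) mod P)) mod P = (X1 mod P + X2 mod P) mod P" .
  have "((X1 mod P + X2 mod P) mod P) div int l ^ b = (X1 mod P div int l ^ b + X2 mod P div int l ^ b) mod int l ^ a"
    unfolding bP using div_add_mod_lemma[OF _ d1[unfolded bP] d2[unfolded bP]] lpos by simp
  then show ?thesis
    unfolding hmap_def Target_def
    using e unfolding U1_def U2_def W1_def W2_def X1_def X2_def P_def by (simp add: crd_add[OF v w])
qed

private lemma hmap_inj: "inj_on hmap (KS l \<alpha> \<beta> \<gamma> \<delta>)"
proof (rule inj_onI)
  fix v w assume v: "v \<in> KS l \<alpha> \<beta> \<gamma> \<delta>" and w: "w \<in> KS l \<alpha> \<beta> \<gamma> \<delta>" and h: "hmap v = hmap w"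
  define U1 where "U1 = crd l (a + b) (fst v)"
  define W1 where "W1 = crd l (a + b) (snd v)"
  define U2 where "U2 = crd l (a + b) (fst w)"
  define W2 where "W2 = crd l (a + b) (snd w)"
  define P where "P = int l ^ (a + b)"
  have vt: "v \<in> Tl l \<times> Tl l" using v KS_sub[of l \<alpha> \<beta> \<gamma> \<delta>] by blast
  have wt: "w \<in> Tl l \<times> Tl l" using w KS_sub[of l \<alpha> \<beta> \<gamma> \<delta>] by blast
  have lv: "lv l (a + b) (fst v)" "lv l (a + b) (snd v)" "lv l (a + b) (fst w)" "lv l (a + b) (snd w)"
    using lvN[OF v] lvN[OF w] by auto
  have d1: "int l ^ b dvd (cu * U1 + cq * W1) mod P" unfolding U1_def W1_def P_def using Xmod_dvd[OF Xdvd[OF v]] .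
  have d2: "int l ^ b dvd (cu * U2 + cq * W2) mod P" unfolding U2_def W2_def P_def using Xmod_dvd[OF Xdvd[OF w]] .
  have hW: "W1 = W2" and hX: "(cu * U1 + cq * W1) mod P div int l ^ b = (cu * U2 + cq * W2) mod P div int l ^ b"
    using h unfolding hmap_def U1_def U2_def W1_def W2_def P_def prod.inject by blast+
  have "(cu * U1 + cq * W1) mod P = (cu * U2 + cq * W2) mod P"
    using hX d1 d2 by (metis dvd_div_mult_self)
  then have "P dvd (cu * U1 + cq * W1) - (cu * U2 + cq * W2)" by (simp add: mod_eq_dvd_iff)
  then have "P dvd cu * (U1 - U2)" using hW by (simp add: algebra_simps)
  moreover have "coprime P cu" unfolding P_def using cop[of "a + b"] by (metis coprime_commute)
  ultimately have "P dvd U1 - U2" using coprime_dvd_mult_right_iff by blast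
  then have "U1 mod P = U2 mod P" by (simp add: mod_eq_dvd_iff)
  moreover have "U1 mod P = U1" "U2 mod P = U2" "W1 mod P = W1"
    using crd_bounds[of "fst v" l] crd_bounds[of "fst w" l] crd_bounds[of "snd v" l] vt wt lpos
    unfolding U1_def U2_def W1_def P_def by auto
  ultimately have "U1 = U2" by simp
  then show "v = w" using lv_crd[OF lpos lv(1)] lv_crd[OF lpos lv(2)] lv_crd[OF lpos lv(3)] lv_crd[OF lpos lv(4)] hW
    unfolding U1_def U2_def W1_def W2_def by (metis prod_eqI)
qed

private lemma hmap_surj: assumes y: "y \<in> carrier (Target l a b)"
  shows "\<exists>v \<in> KS l \<alpha> \<beta> \<gamma> \<delta>. hmap v = y"
proof -
  obtain y1 W where yy: "y = (y1, W)" by (cases y)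
  define P where "P = int l ^ (a + b)"
  define B where "B = int l ^ b"
  have bP: "P = B * int l ^ a" unfolding P_def B_def by (rule P_eq)
  have pos: "B > 0" "P > 0" "int l ^ a > 0" using lpos unfolding B_def P_def by simp_all
  have y1: "0 \<le> y1" "y1 < int l ^ a" and W: "0 \<le> W" "W < P" using y unfolding yy carrier_T P_def by auto
  obtain ui where ui: "[cu * ui = 1] (mod P)" using cong_solve_coprime_int[OF cop] unfolding P_def by blast
  define U where "U = (ui * (B * y1 - cq * W)) mod P"
  have U: "0 \<le> U" "U < P" unfolding U_def using pos by simp_all
  have "(cu * U) mod P = (cu * (ui * (B * y1 - cq * W))) mod P" unfolding U_def by (rule mod_mult_right_eq)
  also have "\<dots> = (cu * ui * (B * y1 - cq * W)) mod P" by (simp only: mult.assoc)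
  also have "\<dots> = ((cu * ui) mod P * (B * y1 - cq * W)) mod P" by (simp add: mod_mult_left_eq)
  also have "\<dots> = (1 mod P * (B * y1 - cq * W)) mod P" using ui unfolding cong_def by simp
  also have "\<dots> = (B * y1 - cq * W) mod P" by (simp add: mod_mult_left_eq)
  finally have cU: "(cu * U) mod P = (B * y1 - cq * W) mod P" .
  define X where "X = cu * U + cq * W"
  have "X mod P = ((cu * U) mod P + cq * W) mod P" unfolding X_def by (simp add: mod_add_left_eq)
  also have "\<dots> = ((B * y1 - cq * W) mod P + cq * W) mod P" using cU by simp
  also have "\<dots> = (B * y1 - cq * W + cq * W) mod P" by (simp add: mod_add_left_eq)
  finally have Xm: "X mod P = (B * y1) mod P" by simp
  have By: "0 \<le> B * y1" "B * y1 < P" using y1 pos unfolding bP by simp_all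
  have XmB: "X mod P = B * y1" using Xm By by simp
  have BX: "B dvd X"
  proof -
    have "B dvd X mod P" using XmB by simp
    moreover have "B dvd P" unfolding bP by simp
    ultimately show ?thesis by (simp add: dvd_mod_iff)
  qed
  have "cu * (cr * U + cs * W) = cr * X + cD * W" unfolding X_def cD_def by (simp add: algebra_simps)
  moreover have "B dvd cr * X + cD * W" using BX hb unfolding B_def by simp
  ultimately have "B dvd cu * (cr * U + cs * W)" by simp
  moreover have "coprime B cu" unfolding B_def using cop[of b] by (metis coprime_commute)
  ultimately have BY: "B dvd cr * U + cs * W" using coprime_dvd_mult_right_iff by blast
  define v where "v = (of_int (U mod P) / of_nat (l ^ (a + b)) :: rat, of_int (W mod P) / of_nat (l ^ (a + b)) :: rat)"
  have abL: "a + b \<le> L" using L by simp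
  have KCv: "KC l \<alpha> \<beta> \<gamma> \<delta> (a + b) U W"
    unfolding KCN[OF abL] dvd_cancel_pow[OF lpos] using BX BY unfolding B_def X_def by blast
  have vK: "v \<in> KS l \<alpha> \<beta> \<gamma> \<delta>" unfolding v_def P_def using mk_KS[OF lpos Z] KCv by blast
  have Um: "U mod P = U" "W mod P = W" using U W by simp_all
  have cv: "crd l (a + b) (fst v) = U" "crd l (a + b) (snd v) = W"
    unfolding v_def Um using mk_Tl[OF U(1) U(2)[unfolded P_def] lpos] mk_Tl[OF W(1) W(2)[unfolded P_def] lpos] by simp_all
  have "hmap v = y" unfolding hmap_def cv yy using XmB pos unfolding X_def P_def B_def by simp
  then show ?thesis using vK by blast
qed

lemma core_iso: "KG (KS l \<alpha> \<beta> \<gamma> \<delta>) \<cong> Target l a b"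
proof -
  have "hmap \<in> iso (KG (KS l \<alpha> \<beta> \<gamma> \<delta>)) (Target l a b)"
    unfolding iso_def hom_def bij_betw_def
  proof (intro CollectI conjI)
    show "hmap \<in> carrier (KG (KS l \<alpha> \<beta> \<gamma> \<delta>)) \<rightarrow> carrier (Target l a b)" using hmap_carrier by (auto simp: KG_def)
    show "\<forall>x\<in>carrier (KG (KS l \<alpha> \<beta> \<gamma> \<delta>)). \<forall>y\<in>carrier (KG (KS l \<alpha> \<beta> \<gamma> \<delta>)).
      hmap (x \<otimes>\<^bsub>KG (KS l \<alpha> \<beta> \<gamma> \<delta>)\<^esub> y) = hmap x \<otimes>\<^bsub>Target l a b\<^esub> hmap y"
      using hmap_hom by (simp add: KG_def)
    show "inj_on hmap (carrier (KG (KS l \<alpha> \<beta> \<gamma> \<delta>)))" using hmap_inj by (simp add: KG_def)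
    have "hmap ` KS l \<alpha> \<beta> \<gamma> \<delta> \<subseteq> carrier (Target l a b)" using hmap_carrier by blast
    moreover have "carrier (Target l a b) \<subseteq> hmap ` KS l \<alpha> \<beta> \<gamma> \<delta>"
    proof
      fix y assume "y \<in> carrier (Target l a b)"
      then obtain v where "v \<in> KS l \<alpha> \<beta> \<gamma> \<delta>" "hmap v = y" using hmap_surj by blast
      then show "y \<in> hmap ` KS l \<alpha> \<beta> \<gamma> \<delta>" by blast
    qed
    ultimately show "hmap ` carrier (KG (KS l \<alpha> \<beta> \<gamma> \<delta>)) = carrier (Target l a b)"
      by (simp add: KG_def)
  qed
  then show ?thesis unfolding is_iso_def by blast
qed

end


lemma KS_rows: "KS l \<gamma> \<delta> \<alpha> \<beta> = KS l \<alpha> \<beta> \<gamma> \<delta>"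
  unfolding KS_def KC_def by blast

lemma KS_cols: "KS l \<alpha> \<beta> \<gamma> \<delta> = prod.swap ` KS l \<beta> \<alpha> \<delta> \<gamma>"
proof -
  have m: "v \<in> KS l \<alpha> \<beta> \<gamma> \<delta> \<longleftrightarrow> prod.swap v \<in> KS l \<beta> \<alpha> \<delta> \<gamma>" for v
    by (cases v) (auto simp: KS_def KC_def add.commute)
  show ?thesis
  proof (intro equalityI subsetI)
    fix v assume "v \<in> KS l \<alpha> \<beta> \<gamma> \<delta>"
    then have "prod.swap v \<in> KS l \<beta> \<alpha> \<delta> \<gamma>" using m by blast
    then show "v \<in> prod.swap ` KS l \<beta> \<alpha> \<delta> \<gamma>" by (metis image_eqI swap_swap)
  next
    fix v assume "v \<in> prod.swap ` KS l \<beta> \<alpha> \<delta> \<gamma>"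
    then obtain w where "w \<in> KS l \<beta> \<alpha> \<delta> \<gamma>" "v = prod.swap w" by blast
    then show "v \<in> KS l \<alpha> \<beta> \<gamma> \<delta>" using m by simp
  qed
qed

lemma KG_swap: "KG (prod.swap ` S) \<cong> KG S"
proof -
  have "prod.swap \<in> iso (KG (prod.swap ` S)) (KG S)"
    unfolding iso_def hom_def bij_betw_def KG_def
    by (auto simp: inj_on_def image_image)
  then show ?thesis unfolding is_iso_def by blast
qed

lemma D_cong: assumes "\<alpha> \<in> Zl l" "\<beta> \<in> Zl l" "\<gamma> \<in> Zl l" "\<delta> \<in> Zl l" "k \<le> m"
  shows "(\<alpha> m * \<delta> m - \<beta> m * \<gamma> m) mod int l ^ k = (\<alpha> k * \<delta> k - \<beta> k * \<gamma> k) mod int l ^ k"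
proof -
  have c: "[x m = x k] (mod int l ^ k)" if "x \<in> Zl l" for x
    unfolding cong_def using Zl_mod[OF that assms(5)] Zl_modself[OF that] by simp
  have "[\<alpha> m * \<delta> m - \<beta> m * \<gamma> m = \<alpha> k * \<delta> k - \<beta> k * \<gamma> k] (mod int l ^ k)"
    by (intro cong_diff cong_mult c assms(1-4))
  then show ?thesis unfolding cong_def .
qed

lemma dvd_neg_D: "(x dvd (p * s - q * r)) \<longleftrightarrow> x dvd (q * r - p * (s::int))"
  by (metis dvd_minus_iff minus_diff_eq)

lemma classify:
  assumes l: "prime l" and M: "M \<in> Mat2 l" and E: "ents l M = (\<alpha>, \<beta>, \<gamma>, \<delta>)"
    and nd: "\<not> (\<forall>n. int l ^ n dvd \<alpha> n * \<delta> n - \<beta> n * \<gamma> n)"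
  shows "\<exists>a b. kergrp l M \<cong> Target l a b"
proof -
  have lpos: "l > 0" using l prime_gt_0_nat by blast
  note Z = ents_Zl[OF lpos M E]
  define D where "D n = \<alpha> n * \<delta> n - \<beta> n * \<gamma> n" for n
  have Dc: "D m mod int l ^ k = D k mod int l ^ k" if "k \<le> m" for k m
    unfolding D_def using D_cong[OF Z that] .
  obtain n0 where n0: "\<not> int l ^ n0 dvd D n0" using nd unfolding D_def by blast
  then obtain n1 where n1: "n0 = Suc n1" by (cases n0) auto
  have exd: "\<exists>n. \<not> int l ^ Suc n dvd D (Suc n)" using n0 n1 by blast
  define d where "d = (LEAST n. \<not> int l ^ Suc n dvd D (Suc n))"
  have hd1: "\<not> int l ^ Suc d dvd D (Suc d)" unfolding d_def using LeastI_ex[OF exd] .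
  have hdd: "int l ^ d dvd D d"
  proof (cases d)
    case 0 then show ?thesis by simp
  next
    case (Suc d')
    then have "d' < d" by simp
    then have "\<not> \<not> int l ^ Suc d' dvd D (Suc d')" unfolding d_def using not_less_Least by blast
    then show ?thesis using Suc by simp
  qed
  have hd2: "int l ^ d dvd D m" if "d \<le> m" for m
    using hdd Dc[OF that] by (simp add: dvd_eq_mod_eq_0)
  define P where "P e \<longleftrightarrow> \<not> (\<alpha> (Suc e) = 0 \<and> \<beta> (Suc e) = 0 \<and> \<gamma> (Suc e) = 0 \<and> \<delta> (Suc e) = 0)" for e
  have exa: "\<exists>e. P e"
  proof (rule ccontr)
    assume "\<not> (\<exists>e. P e)"
    then have "D (Suc d) = 0" unfolding P_def D_def by simp
    then show False using hd1 by simp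
  qed
  define a where "a = (LEAST e. P e)"
  have ha2: "P a" unfolding a_def using LeastI_ex[OF exa] .
  have ha1: "\<alpha> a = 0 \<and> \<beta> a = 0 \<and> \<gamma> a = 0 \<and> \<delta> a = 0"
  proof (cases a)
    case 0 then show ?thesis using Zl_0 Z by simp
  next
    case (Suc a')
    then have "a' < a" by simp
    then have "\<not> P a'" unfolding a_def using not_less_Least by blast
    then show ?thesis using Suc unfolding P_def by simp
  qed
  have lowdvd: "int l ^ c dvd x m" if "x \<in> Zl l" "x a = 0" "c \<le> m" "c \<le> a" for x c m
  proof -
    have "x m mod int l ^ c = x c" using Zl_mod[OF that(1,3)] .
    also have "x c = x a mod int l ^ c" using Zl_mod[OF that(1,4)] by simp
    finally show ?thesis using that(2) by (simp add: dvd_eq_mod_eq_0)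
  qed
  have a2d: "2 * a \<le> d"
  proof (rule ccontr)
    assume "\<not> 2 * a \<le> d"
    define c where "c = min a (Suc d)"
    have c: "c \<le> Suc d" "c \<le> a" "Suc d \<le> c + c" using \<open>\<not> 2 * a \<le> d\<close> unfolding c_def by auto
    have "int l ^ c dvd \<alpha> (Suc d)" "int l ^ c dvd \<beta> (Suc d)" "int l ^ c dvd \<gamma> (Suc d)" "int l ^ c dvd \<delta> (Suc d)"
      using lowdvd[OF Z(1) _ c(1,2)] lowdvd[OF Z(2) _ c(1,2)] lowdvd[OF Z(3) _ c(1,2)] lowdvd[OF Z(4) _ c(1,2)] ha1 by auto
    then have "int l ^ c * int l ^ c dvd D (Suc d)" unfolding D_def by (simp add: mult_dvd_mono dvd_diff)
    then have "int l ^ (c + c) dvd D (Suc d)" by (simp add: power_add)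
    moreover have "int l ^ Suc d dvd int l ^ (c + c)" using le_imp_power_dvd[OF c(3)] by blast
    ultimately show False using hd1 dvd_trans by blast
  qed
  define b where "b = d - 2 * a"
  define L where "L = 2 * a + b + 1"
  have Ld: "L = Suc d" unfolding L_def b_def using a2d by simp
  have aL: "a \<le> L" "Suc a \<le> L" unfolding L_def by simp_all
  have da: "int l ^ a dvd \<alpha> L" "int l ^ a dvd \<beta> L" "int l ^ a dvd \<gamma> L" "int l ^ a dvd \<delta> L"
    using lowdvd[OF Z(1) _ aL(1)] lowdvd[OF Z(2) _ aL(1)] lowdvd[OF Z(3) _ aL(1)] lowdvd[OF Z(4) _ aL(1)] ha1 by auto
  have hD: "int l ^ (2 * a + b) dvd D L" using hd2[of L] Ld a2d unfolding b_def by simp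
  have hD': "\<not> int l ^ (2 * a + b + 1) dvd D L" using hd1 Ld a2d unfolding b_def by simp
  have np: "\<not> int l ^ Suc a dvd x L" if "x \<in> Zl l" "x (Suc a) \<noteq> 0" for x
  proof
    assume "int l ^ Suc a dvd x L"
    then have "x L mod int l ^ Suc a = 0" by simp
    then show False using Zl_mod[OF that(1) aL(2)] that(2) by simp
  qed
  have K: "kergrp l M = KG (KS l \<alpha> \<beta> \<gamma> \<delta>)" using kerMI_ents[OF lpos M E] by (simp add: kergrp_KG)
  have "KG (KS l \<alpha> \<beta> \<gamma> \<delta>) \<cong> Target l a b"
  proof -
    consider "\<alpha> (Suc a) \<noteq> 0" | "\<beta> (Suc a) \<noteq> 0" | "\<gamma> (Suc a) \<noteq> 0" | "\<delta> (Suc a) \<noteq> 0"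
      using ha2 unfolding P_def by blast
    then show ?thesis
    proof cases
      case 1
      show ?thesis
        by (rule core_iso[OF l Z L_def da np[OF Z(1) 1]]) (use hD hD' in \<open>simp_all add: D_def\<close>)
    next
      case 3
      have "KG (KS l \<gamma> \<delta> \<alpha> \<beta>) \<cong> Target l a b"
        by (rule core_iso[OF l Z(3,4,1,2) L_def da(3,4,1,2) np[OF Z(3) 3]])
          (use hD hD' in \<open>simp_all add: D_def dvd_neg_D mult.commute\<close>)
      then show ?thesis by (simp add: KS_rows)
    next
      case 2
      have "KG (KS l \<beta> \<alpha> \<delta> \<gamma>) \<cong> Target l a b"
        by (rule core_iso[OF l Z(2,1,4,3) L_def da(2,1,4,3) np[OF Z(2) 2]])
          (use hD hD' in \<open>simp_all add: D_def dvd_neg_D mult.commute\<close>)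
      then show ?thesis using KG_swap[of "KS l \<beta> \<alpha> \<delta> \<gamma>"] KS_cols[of l \<alpha> \<beta> \<gamma> \<delta>] iso_trans by metis
    next
      case 4
      have "KG (KS l \<delta> \<gamma> \<beta> \<alpha>) \<cong> Target l a b"
        by (rule core_iso[OF l Z(4,3,2,1) L_def da(4,3,2,1) np[OF Z(4) 4]])
          (use hD hD' in \<open>simp_all add: D_def mult.commute\<close>)
      moreover have "KS l \<alpha> \<beta> \<gamma> \<delta> = prod.swap ` KS l \<delta> \<gamma> \<beta> \<alpha>"
        using KS_cols[of l \<alpha> \<beta> \<gamma> \<delta>] KS_rows[of l \<delta> \<gamma> \<beta> \<alpha>] by simp
      ultimately show ?thesis using KG_swap[of "KS l \<delta> \<gamma> \<beta> \<alpha>"] iso_trans by metis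
    qed
  qed
  then show ?thesis using K by auto
qed


lemma three_roots:
  fixes p q r s :: "nat \<Rightarrow> int" and x y z :: int
  assumes l: "l \<ge> 2" and d: "x \<noteq> y" "x \<noteq> z" "y \<noteq> z"
    and Qx: "\<And>n. int l ^ n dvd (p n - x) * (s n - x) - q n * r n"
    and Qy: "\<And>n. int l ^ n dvd (p n - y) * (s n - y) - q n * r n"
    and Qz: "\<And>n. int l ^ n dvd (p n - z) * (s n - z) - q n * r n"
  shows False
proof -
  define c where "c = (x - y) * (x - z) * (y - z)"
  have c0: "c \<noteq> 0" using d unfolding c_def by simp
  have cd: "int l ^ n dvd c" for n
  proof -
    have e1: "((p n - x) * (s n - x) - q n * r n) - ((p n - y) * (s n - y) - q n * r n) = (x - y) * (x + y - (p n + s n))"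
      by (simp add: algebra_simps)
    have e2: "((p n - x) * (s n - x) - q n * r n) - ((p n - z) * (s n - z) - q n * r n) = (x - z) * (x + z - (p n + s n))"
      by (simp add: algebra_simps)
    have d1: "int l ^ n dvd (x - y) * (x + y - (p n + s n))" using dvd_diff[OF Qx[of n] Qy[of n]] unfolding e1 .
    have d2: "int l ^ n dvd (x - z) * (x + z - (p n + s n))" using dvd_diff[OF Qx[of n] Qz[of n]] unfolding e2 .
    have "int l ^ n dvd (x - z) * ((x - y) * (x + y - (p n + s n))) - (x - y) * ((x - z) * (x + z - (p n + s n)))"
      using d1 d2 by (simp add: dvd_diff)
    moreover have "(x - z) * ((x - y) * (x + y - (p n + s n))) - (x - y) * ((x - z) * (x + z - (p n + s n))) = c"
      unfolding c_def by (simp add: algebra_simps)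
    ultimately show ?thesis by simp
  qed
  define n where "n = nat \<bar>c\<bar>"
  have "\<bar>int l ^ n\<bar> \<le> \<bar>c\<bar>" using dvd_imp_le_int[OF c0 cd[of n]] .
  moreover have "int n < 2 ^ n" by (metis less_exp of_nat_less_iff of_nat_numeral of_nat_power)
  moreover have "(2::int) ^ n \<le> int l ^ n" using l by (simp add: power_mono)
  ultimately show False unfolding n_def using c0 by simp
qed

definition gsc :: "nat \<Rightarrow> zl \<Rightarrow> mat2" where
  "gsc l x = (x, zconst l 0, zconst l 0, x)"

lemma gsc_Mat2: "l > 0 \<Longrightarrow> x \<in> Zl l \<Longrightarrow> gsc l x \<in> Mat2 l"
  by (simp add: gsc_def Mat2_def zconst_Zl)

lemma mid_gsc: "mid l = gsc l (zconst l 1)" by (simp add: mid_def gsc_def)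

lemma gsc_left: "mmul l (gsc l x) (a, b, c, d) = (zmul l x a, zmul l x b, zmul l x c, zmul l x d)"
  by (simp add: gsc_def mmul_def zadd_def zmul_def zconst_def fun_eq_iff)

lemma gsc_right: "mmul l (a, b, c, d) (gsc l x) = (zmul l a x, zmul l b x, zmul l c x, zmul l d x)"
  by (simp add: gsc_def mmul_def zadd_def zmul_def zconst_def fun_eq_iff)

lemma conj_entry: assumes "(x * y) mod m = 1 mod m" "0 \<le> (a::int)" "a < m"
  shows "((x * a) mod m * y) mod m = a"
proof -
  have "((x * a) mod m * y) mod m = (x * a * y) mod m" by (rule mod_mult_left_eq)
  also have "x * a * y = (x * y) * a" by (simp add: algebra_simps)
  also have "((x * y) * a) mod m = ((x * y) mod m * a) mod m" by (rule mod_mult_left_eq[symmetric])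
  also have "\<dots> = (1 mod m * a) mod m" using assms(1) by simp
  also have "\<dots> = a mod m" by (simp add: mod_mult_left_eq)
  finally show ?thesis using assms(2,3) by simp
qed

lemma gsc_conj: assumes X: "X \<in> Mat2 l" and xy: "\<And>n. (x n * y n) mod int l ^ n = 1 mod int l ^ n"
  shows "mmul l (mmul l (gsc l x) X) (gsc l y) = X"
proof -
  obtain a b c d where Xq: "X = (a, b, c, d)" by (cases X)
  have Z: "a \<in> Zl l" "b \<in> Zl l" "c \<in> Zl l" "d \<in> Zl l" using X unfolding Xq Mat2_def by auto
  have e: "zmul l (zmul l x w) y = w" if "w \<in> Zl l" for w
    unfolding zmul_def fun_eq_iff using conj_entry[OF xy] Zl_bounds[OF that] by simp
  show ?thesis unfolding Xq gsc_left gsc_right using e Z by simp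
qed


definition zinv :: "nat \<Rightarrow> int \<Rightarrow> zl" where
  "zinv l c n = (SOME t. 0 \<le> t \<and> t < int l ^ n \<and> [c * t = 1] (mod int l ^ n))"

lemma inv_unique: fixes c s t m :: int
  assumes "coprime c m" "[c * s = 1] (mod m)" "[c * t = 1] (mod m)" "0 \<le> s" "s < m" "0 \<le> t" "t < m"
  shows "s = t"
proof -
  have "[c * s = c * t] (mod m)" using assms(2,3) by (metis cong_sym cong_trans)
  then have "[s = t] (mod m)" using assms(1) by (simp add: cong_mult_lcancel)
  then show ?thesis using assms(4-7) unfolding cong_def by simp
qed

lemma zinv_prop: assumes "l > 0" "coprime c (int l)"
  shows "0 \<le> zinv l c n \<and> zinv l c n < int l ^ n \<and> [c * zinv l c n = 1] (mod int l ^ n)"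
proof -
  have cop: "coprime c (int l ^ n)" using assms(2) by simp
  obtain t0 where t0: "[c * t0 = 1] (mod int l ^ n)" using cong_solve_coprime_int[OF cop] by blast
  have p: "int l ^ n > 0" using assms(1) by simp
  have "[c * (t0 mod int l ^ n) = 1] (mod int l ^ n)" using t0 unfolding cong_def by (simp add: mod_mult_right_eq)
  then have "\<exists>t. 0 \<le> t \<and> t < int l ^ n \<and> [c * t = 1] (mod int l ^ n)" using p
    by (intro exI[of _ "t0 mod int l ^ n"]) simp
  then show ?thesis unfolding zinv_def by (rule someI_ex)
qed

lemma zinv_Zl: assumes "l > 0" "coprime c (int l)" shows "zinv l c \<in> Zl l"
  unfolding Zl_def mem_Collect_eq
proof
  fix n
  have cop: "coprime c (int l ^ n)" using assms(2) by simp
  have p: "int l ^ n > 0" using assms(1) by simp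
  note A = zinv_prop[OF assms, of n] and B = zinv_prop[OF assms, of "Suc n"]
  have "[c * zinv l c (Suc n) = 1] (mod int l ^ n)"
    using B cong_dvd_modulus[of "c * zinv l c (Suc n)" 1 "int l ^ Suc n" "int l ^ n"] by simp
  then have "[c * (zinv l c (Suc n) mod int l ^ n) = 1] (mod int l ^ n)" unfolding cong_def by (simp add: mod_mult_right_eq)
  then have "zinv l c n = zinv l c (Suc n) mod int l ^ n"
    using inv_unique[OF cop] A p by auto
  then show "0 \<le> zinv l c n \<and> zinv l c n < int l ^ n \<and> zinv l c n = zinv l c (Suc n) mod int l ^ n" using A by simp
qed

lemma zinv_mul: assumes "l > 0" "coprime c (int l)"
  shows "(zconst l c n * zinv l c n) mod int l ^ n = 1 mod int l ^ n"
  using zinv_prop[OF assms, of n] unfolding zconst_def cong_def by (simp add: mod_mult_left_eq)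

lemma gsc_mul_gsc: "mmul l (gsc l x) (gsc l y) = gsc l (zmul l x y)"
  unfolding gsc_def[of l y] gsc_left by (simp add: gsc_def zmul_def zconst_def fun_eq_iff)

lemma zmul_inv_one: assumes "l > 0" "coprime c (int l)"
  shows "zmul l (zconst l c) (zinv l c) = zconst l 1" "zmul l (zinv l c) (zconst l c) = zconst l 1"
  using zinv_mul[OF assms] unfolding zmul_def zconst_def fun_eq_iff by (simp_all add: mult.commute)

definition sc :: "nat \<Rightarrow> int \<Rightarrow> mat2" where "sc l c = gsc l (zconst l c)"

lemma sc_Mat2: "l > 0 \<Longrightarrow> sc l c \<in> Mat2 l" unfolding sc_def by (simp add: gsc_Mat2 zconst_Zl)

lemma sc_GL2: assumes "l > 0" "coprime c (int l)"
  shows "sc l c \<in> GL2 l" and "inv\<^bsub>GL2grp l\<^esub> (sc l c) = gsc l (zinv l c)"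
proof -
  have m1: "mmul l (sc l c) (gsc l (zinv l c)) = mid l" "mmul l (gsc l (zinv l c)) (sc l c) = mid l"
    unfolding sc_def gsc_mul_gsc zmul_inv_one[OF assms] mid_gsc by simp_all
  have Mi: "gsc l (zinv l c) \<in> Mat2 l" using gsc_Mat2 zinv_Zl assms by blast
  show g: "sc l c \<in> GL2 l" unfolding GL2_def using sc_Mat2[OF assms(1)] Mi m1 by blast
  have gi: "gsc l (zinv l c) \<in> GL2 l" unfolding GL2_def using sc_Mat2[OF assms(1)] Mi m1 by blast
  show "inv\<^bsub>GL2grp l\<^esub> (sc l c) = gsc l (zinv l c)"
    using group.inv_equality[OF GL2grp_group[OF assms(1)], of "gsc l (zinv l c)" "sc l c"] m1 g gi by simp
qed

lemma madd_Mat2: "l > 0 \<Longrightarrow> M \<in> Mat2 l \<Longrightarrow> N \<in> Mat2 l \<Longrightarrow> madd l M N \<in> Mat2 l"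
  by (auto simp: Mat2_def madd_def zadd_Zl)

lemma mscal_Mat2: "l > 0 \<Longrightarrow> x \<in> Zl l \<Longrightarrow> M \<in> Mat2 l \<Longrightarrow> mscal l x M \<in> Mat2 l"
  by (auto simp: Mat2_def mscal_def zmul_Zl)

lemma companion_Mat2: "l > 0 \<Longrightarrow> t \<in> Zl l \<Longrightarrow> n \<in> Zl l \<Longrightarrow> companion l t n \<in> Mat2 l"
  by (auto simp: Mat2_def companion_def zconst_Zl zsub_Zl)

lemma cartan_Mat2: assumes "l > 0" "cartan l C" shows "C \<subseteq> Mat2 l"
proof -
  obtain t n P Pinv where tn: "t \<in> Zl l" "n \<in> Zl l" and P: "P \<in> Mat2 l" "Pinv \<in> Mat2 l"
    and C: "C \<subseteq> qring_image l t n P Pinv" using assms(2) unfolding cartan_def by blast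
  have "qring_image l t n P Pinv \<subseteq> Mat2 l"
    unfolding qring_image_def
    using P tn assms(1) by (auto intro!: mmul_Mat2 madd_Mat2 mscal_Mat2 mid_Mat2 companion_Mat2)
  then show ?thesis using C by blast
qed

lemma sc_normalizer: assumes "l > 0" "coprime c (int l)" "cartan l C"
  shows "sc l c \<in> normalizer2 l C"
proof -
  have CM: "C \<subseteq> Mat2 l" using cartan_Mat2[OF assms(1,3)] .
  have e: "mmul l (mmul l (sc l c) X) (inv\<^bsub>GL2grp l\<^esub> (sc l c)) = X" if "X \<in> C" for X
  proof -
    have "mmul l (mmul l (sc l c) X) (gsc l (zinv l c)) = X" unfolding sc_def
      using gsc_conj[of X l "zconst l c" "zinv l c"] CM that zinv_mul[OF assms(1,2)] by blast
    then show ?thesis by (simp only: sc_GL2(2)[OF assms(1,2)])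
  qed
  have "(\<lambda>x. mmul l (mmul l (sc l c) x) (inv\<^bsub>GL2grp l\<^esub> (sc l c))) ` C = C"
    using e by simp
  then show ?thesis unfolding normalizer2_def using sc_GL2(1)[OF assms(1,2)] by blast
qed


lemma scal_Q: assumes M: "M \<in> Mat2 l" and E: "ents l M = (\<alpha>, \<beta>, \<gamma>, \<delta>)"
  and PM: "\<And>n. int l ^ n dvd \<alpha> n * \<delta> n - \<beta> n * \<gamma> n"
  and N: "mmul l (sc l x) M = (p, q, r, s)"
  shows "int l ^ n dvd (p n - x) * (s n - x) - q n * r n"
proof -
  obtain a b c d where Mq: "M = (a, b, c, d)" by (cases M)
  define m where "m = int l ^ n"
  have pq: "p n = (x mod m * a n) mod m" "q n = (x mod m * b n) mod m" "r n = (x mod m * c n) mod m" "s n = (x mod m * d n) mod m"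
    using N unfolding Mq sc_def gsc_left by (auto simp: zmul_def zconst_def m_def)
  have ab: "\<alpha> n = (a n - 1 mod m) mod m" "\<beta> n = (b n - 0 mod m) mod m" "\<gamma> n = (c n - 0 mod m) mod m" "\<delta> n = (d n - 1 mod m) mod m"
    using E unfolding Mq ents_def by (auto simp: zsub_def zconst_def m_def)
  have c1: "[p n - x = x * \<alpha> n] (mod m)" "[s n - x = x * \<delta> n] (mod m)" "[q n = x * \<beta> n] (mod m)" "[r n = x * \<gamma> n] (mod m)"
    unfolding pq ab cong_def by (simp_all add: mod_simps algebra_simps)
  have "[(p n - x) * (s n - x) - q n * r n = (x * \<alpha> n) * (x * \<delta> n) - (x * \<beta> n) * (x * \<gamma> n)] (mod m)"
    by (intro cong_diff cong_mult c1)
  moreover have "(x * \<alpha> n) * (x * \<delta> n) - (x * \<beta> n) * (x * \<gamma> n) = (x * x) * (\<alpha> n * \<delta> n - \<beta> n * \<gamma> n)"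
    by (simp add: algebra_simps)
  moreover have "m dvd (x * x) * (\<alpha> n * \<delta> n - \<beta> n * \<gamma> n)" using PM[of n] unfolding m_def by simp
  ultimately show ?thesis unfolding m_def by (metis cong_dvd_iff)
qed


lemma ball_of_lopen: assumes "lopen l V" "M \<in> V" shows "\<exists>k. {N \<in> Mat2 l. red N k = red M k} \<subseteq> V"
  using assms unfolding lopen_def by blast

lemma red_sc_mid: assumes "[c = 1] (mod int l ^ Suc k)"
  shows "red (sc l c) k = red (mid l) k"
proof -
  have "[c = 1] (mod int l ^ k)" using cong_dvd_modulus[OF assms, of "int l ^ k"] by (simp add: le_imp_power_dvd)
  then have "c mod int l ^ k = 1 mod int l ^ k" unfolding cong_def .
  then show ?thesis by (simp add: red_def sc_def gsc_def mid_def zconst_def)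
qed

lemma cop_of_cong: assumes l: "prime l" and c: "[c = 1] (mod int l ^ Suc k)" shows "coprime c (int l)"
proof -
  have d1: "int l ^ Suc k dvd c - 1" using c by (simp add: cong_iff_dvd_diff)
  have d2: "int l dvd int l ^ Suc k" by simp
  have d3: "int l dvd c - 1" using dvd_trans[OF d2 d1] .
  have n1: "\<not> int l dvd 1" using l prime_gt_1_nat by fastforce
  have "\<not> int l dvd c"
  proof
    assume "int l dvd c"
    then have "int l dvd c - (c - 1)" using d3 by (rule dvd_diff)
    then show False using n1 by simp
  qed
  then have "coprime (int l) c" using prime_imp_coprime[of "int l" c] l by simp
  then show ?thesis by (simp add: coprime_commute)
qed

context
  fixes l :: nat and G :: "mat2 set" and \<mu> :: "mat2 measure"
  assumes l: "prime l" and sg: "subgroup G (GL2grp l)"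
    and op: "lopen l G \<or> (\<exists>C. cartan l C \<and> G \<subseteq> normalizer2 l C \<and> lopen_in l (normalizer2 l C) G)"
    and hp: "haar_prob l G \<mu>"
begin

lemma scalars_in_G: "\<exists>k. \<forall>c. [c = 1] (mod int l ^ Suc k) \<longrightarrow> sc l c \<in> G"
proof -
  have l0: "l > 0" using l prime_gt_0_nat by blast
  have midG: "mid l \<in> G" using midG[OF l sg hp] .
  show ?thesis using op
  proof
    assume "lopen l G"
    then obtain k where k: "{N \<in> Mat2 l. red N k = red (mid l) k} \<subseteq> G" using ball_of_lopen midG by blast
    show ?thesis using k red_sc_mid sc_Mat2[OF l0] by blast
  next
    assume "\<exists>C. cartan l C \<and> G \<subseteq> normalizer2 l C \<and> lopen_in l (normalizer2 l C) G"
    then obtain C V where C: "cartan l C" and V: "lopen l V" "G = V \<inter> normalizer2 l C"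
      unfolding lopen_in_def by blast
    obtain k where k: "{N \<in> Mat2 l. red N k = red (mid l) k} \<subseteq> V" using ball_of_lopen V midG by blast
    have "sc l c \<in> G" if "[c = 1] (mod int l ^ Suc k)" for c
    proof -
      have "sc l c \<in> V" using k red_sc_mid[OF that] sc_Mat2[OF l0] by blast
      moreover have "sc l c \<in> normalizer2 l C" using sc_normalizer[OF l0 cop_of_cong[OF l that] C] .
      ultimately show ?thesis using V by blast
    qed
    then show ?thesis by blast
  qed
qed

lemma l0': "l > 0" using l prime_gt_0_nat by blast

lemma GM': "G \<subseteq> Mat2 l" using GM[OF l sg hp] .

lemma Mab_sets: "Mab l G a b \<in> sets \<mu>"
  using Mab_measure(2)[OF l sg hp, of a b "a + b + 1"] by simp

lemma UMab_sets: "(\<Union>a b. Mab l G a b) \<in> sets \<mu>"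
proof -
  interpret prob_space \<mu> using PS[OF l sg hp] .
  have "(\<Union>b. Mab l G a b) \<in> sets \<mu>" for a using Mab_sets by (intro sets.countable_UN) auto
  then show ?thesis by (intro sets.countable_UN) auto
qed

lemma notMab_PM: assumes "M \<in> G" "M \<notin> (\<Union>a b. Mab l G a b)" "ents l M = (\<alpha>, \<beta>, \<gamma>, \<delta>)"
  shows "int l ^ n dvd \<alpha> n * \<delta> n - \<beta> n * \<gamma> n"
proof (rule ccontr)
  assume "\<not> int l ^ n dvd \<alpha> n * \<delta> n - \<beta> n * \<gamma> n"
  then obtain a b where "kergrp l M \<cong> Target l a b" using classify[OF l _ assms(3)] GM' assms(1) by blast
  then have "M \<in> Mab l G a b" using assms(1) by (simp add: Mab_def Target_def)
  then show False using assms(2) by blast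
qed

lemma Z_null: "measure \<mu> (G - (\<Union>a b. Mab l G a b)) = 0"
proof -
  interpret prob_space \<mu> using PS[OF l sg hp] .
  define Z where "Z = G - (\<Union>a b. Mab l G a b)"
  have ZS: "Z \<in> sets \<mu>" unfolding Z_def using UMab_sets spaceG[OF l sg hp] by (metis sets.compl_sets)
  obtain k where k: "\<And>c. [c = 1] (mod int l ^ Suc k) \<Longrightarrow> sc l c \<in> G" using scalars_in_G by blast
  define lam where "lam = 1 + int l ^ Suc k"
  have lam1: "lam > 1" unfolding lam_def using l0' by simp
  have lamc: "[lam ^ j = 1] (mod int l ^ Suc k)" for j
  proof -
    have "[lam = 1] (mod int l ^ Suc k)" unfolding lam_def cong_def by simp
    then show ?thesis using cong_pow by fastforce
  qed
  have gG: "sc l (lam ^ j) \<in> G" for j using k[OF lamc] .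
  define T where "T j = (\<lambda>X. mmul l (sc l (lam ^ j)) X) ` Z" for j
  have TS: "T j \<in> sets \<mu>" and Tm: "emeasure \<mu> (T j) = emeasure \<mu> Z" for j
    using hp gG[of j] ZS unfolding haar_prob_def T_def by blast+
  have Q: "int l ^ n dvd (p n - lam ^ j) * (s n - lam ^ j) - q n * r n"
    if Tp: "(p, q, r, s) \<in> T j" for p q r s j n
  proof -
    obtain M where M: "M \<in> Z" "(p, q, r, s) = mmul l (sc l (lam ^ j)) M" using Tp unfolding T_def by blast
    obtain \<alpha> \<beta> \<gamma> \<delta> where E: "ents l M = (\<alpha>, \<beta>, \<gamma>, \<delta>)" by (cases "ents l M")
    have MG: "M \<in> G" "M \<notin> (\<Union>a b. Mab l G a b)" using M(1) unfolding Z_def by auto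
    show ?thesis using scal_Q[OF _ E notMab_PM[OF MG E] M(2)[symmetric]] MG(1) GM' by blast
  qed
  have lam_inj: "lam ^ i = lam ^ j \<Longrightarrow> i = j" for i j using lam1 by (simp add: power_inject_exp)
  have no3: False if H: "x \<in> T i" "x \<in> T j" "x \<in> T m" "i \<noteq> j" "i \<noteq> m" "j \<noteq> m" for x i j m
  proof -
    obtain p q r s where x: "x = (p, q, r, s)" by (cases x)
    have l2: "l \<ge> 2" using l prime_ge_2_nat by blast
    have d: "lam ^ i \<noteq> lam ^ j" "lam ^ i \<noteq> lam ^ m" "lam ^ j \<noteq> lam ^ m" using lam_inj H(4-6) by blast+
    have hi: "(p, q, r, s) \<in> T i" "(p, q, r, s) \<in> T j" "(p, q, r, s) \<in> T m" using H(1-3) unfolding x by auto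
    show False by (rule three_roots[OF l2 d Q[OF hi(1)] Q[OF hi(2)] Q[OF hi(3)]])
  qed
  have card2: "card {j \<in> {..<J}. j \<in> {j. x \<in> T j}} \<le> 2" for J x
  proof (rule ccontr)
    assume "\<not> card {j \<in> {..<J}. j \<in> {j. x \<in> T j}} \<le> 2"
    then have "3 \<le> card {j \<in> {..<J}. j \<in> {j. x \<in> T j}}" by simp
    then obtain S where S: "S \<subseteq> {j \<in> {..<J}. j \<in> {j. x \<in> T j}}" "card S = 3" by (rule obtain_subset_with_card_n)
    from S(2) obtain i j m where ijm: "S = {i, j, m}" "i \<noteq> j" "j \<noteq> m" "i \<noteq> m" unfolding card_3_iff by blast
    have "x \<in> T i" "x \<in> T j" "x \<in> T m" using S(1) unfolding ijm(1) by auto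
    then show False using no3 ijm(2-4) by blast
  qed
  have pw: "(\<Sum>j<J. indicator (T j) x) \<le> (2::ennreal)" for J x
  proof -
    have "(\<Sum>j<J. indicator (T j) x :: ennreal) = of_nat (card ({..<J} \<inter> {j. x \<in> T j}))"
      by (simp add: indicator_def)
    also have "\<dots> \<le> of_nat 2" using card2[of J x] by (simp only: of_nat_le_iff Int_def)
    finally show ?thesis by simp
  qed
  have bound: "of_nat J * emeasure \<mu> Z \<le> 2" for J
  proof -
    have "of_nat J * emeasure \<mu> Z = (\<Sum>j<J. emeasure \<mu> (T j))" using Tm by simp
    also have "\<dots> = (\<Sum>j<J. \<integral>\<^sup>+ x. indicator (T j) x \<partial>\<mu>)" using TS by simp
    also have "\<dots> = (\<integral>\<^sup>+ x. (\<Sum>j<J. indicator (T j) x) \<partial>\<mu>)"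
      by (rule nn_integral_sum[symmetric]) (use TS in auto)
    also have "\<dots> \<le> (\<integral>\<^sup>+ x. 2 \<partial>\<mu>)" by (rule nn_integral_mono) (use pw in auto)
    also have "\<dots> = 2" using emeasure_space_1 by simp
    finally show ?thesis .
  qed
  have mZ: "real J * measure \<mu> Z \<le> 2" for J
  proof -
    have "ennreal (real J * measure \<mu> Z) = of_nat J * emeasure \<mu> Z"
      by (simp add: emeasure_eq_measure ennreal_mult' ennreal_of_nat_eq_real_of_nat)
    then have "ennreal (real J * measure \<mu> Z) \<le> ennreal 2" using bound[of J] by simp
    then show ?thesis using ennreal_le_iff[of 2 "real J * measure \<mu> Z"] by (simp del: ennreal_numeral)
  qed
  have "measure \<mu> Z \<le> 0"
  proof (rule ccontr)
    assume "\<not> measure \<mu> Z \<le> 0"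
    then have pos: "measure \<mu> Z > 0" by simp
    obtain J :: nat where J: "3 / measure \<mu> Z < real J" using reals_Archimedean2 by blast
    then have "3 < real J * measure \<mu> Z" using pos by (simp add: field_simps)
    then show False using mZ[of J] by simp
  qed
  then show ?thesis unfolding Z_def using measure_nonneg[of \<mu>] by (meson order_antisym)
qed

end


theorem lemma12:
  fixes l :: nat and G :: "mat2 set" and \<mu> :: "mat2 measure"
  assumes "prime l"
    and "subgroup G (GL2grp l)"
    and "lopen l G \<or> (\<exists>C. cartan l C \<and> G \<subseteq> normalizer2 l C \<and> lopen_in l (normalizer2 l C) G)"
    and "haar_prob l G \<mu>"
  shows "(\<forall>a b. Mab l G a b \<in> sets \<mu>
            \<and> (\<forall>n. n > a + b \<longrightarrow> measure \<mu> (Mab l G a b) = mu_n l G a b n)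
            \<and> (measure \<mu> (Mab l G a b) = 0 \<longleftrightarrow> Mab l G a b = {}))
       \<and> (\<Union>a b. Mab l G a b) \<in> sets \<mu>
       \<and> measure \<mu> (G - (\<Union>a b. Mab l G a b)) = 0"
proof (intro conjI allI impI)
  fix a b
  show "Mab l G a b \<in> sets \<mu>" using Mab_sets[OF assms] .
  show "measure \<mu> (Mab l G a b) = mu_n l G a b n" if "a + b < n" for n
    using Mab_measure(1)[OF assms(1,2,4) that] .
  show "measure \<mu> (Mab l G a b) = 0 \<longleftrightarrow> Mab l G a b = {}"
    using Mab_zero[OF assms(1,2,4), of a b "a + b + 1"] by simp
next
  show "(\<Union>a b. Mab l G a b) \<in> sets \<mu>" using UMab_sets[OF assms] .
  show "measure \<mu> (G - (\<Union>a b. Mab l G a b)) = 0" using Z_null[OF assms] .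
qed


end
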